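(* Let $T$ be a complete $L$-theory, $\phi(x,y)$ an $L$-formula and $\mathcal U$ the monster model of $T$. Identify $\phi(a,b)$ with $1$ if it holds and $0$ otherwise. Then the following are equivalent: (i) $\phi$ has NIP for $T$; (ii) for every sequence $(a_i:i<\omega)$ in $\mathcal U$ there is a subsequence $(a_{j_i}:i<\omega)$ such that for every $b\in\mathcal U$ the sequence of truth values $(\phi(a_{j_i},b):i<\omega)$ is eventually constant; (iii) for every sequence $(a_i:i<\omega)$ in $\mathcal U$ there are a subsequence $(a_{j_i}:i<\omega)$ and a natural number $N$ such that $\sum_{i=1}^\infty|\phi(a_{j_i},b)-\phi(a_{j_{i+1}},b)|\le N$ for every $b\in\mathcal U$; (iv) for every sequence $(a_i:i<\omega)$ in $\mathcal U$ there is a subsequence $(a_{j_i}:i<\omega)$ such that the sequence of functions $\phi(a_{j_i},y)$ converges pointwise to a function $f$ which is a difference of bounded semi-continuous functions.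
   Context: $\phi(x,y)$ has NIP for $T$ if there is no sequence $(a_i:i<\omega)$ in $\mathcal U$ such that for every $S\subseteq\omega$ some $b$ satisfies $\phi(a_i,b)\iff i\in S$. For a countable set $A$ of tuples, $\tilde\phi(y,x)=\phi(x,y)$ and $S_{\tilde\phi}(A)$ is the (compact, metrizable) Stone space of complete $\tilde\phi$-types over $A$, i.e. ultrafilters of the Boolean algebra generated by the formulas $\phi(a,y)$, $a\in A$; each $a\in A$ gives a continuous function $\phi(a,y):S_{\tilde\phi}(A)\to\{0,1\}$, $q\mapsto 1$ iff $\phi(a,y)\in q$. In (iv) the functions are regarded on $S_{\tilde\phi}(\{a_{j_i}:i<\omega\})$. A function is DBSC if it equals $F_1-F_2$ with $F_1,F_2$ bounded semi-continuous (upper or lower semi-continuous) functions. *)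

theory Defs
  imports "HOL-Analysis.Analysis"
begin

text \<open>A language L consists of function symbols of type 'f with arities fa and relation
  symbols of type 'r with arities ra. Variables are natural numbers.\<close>

datatype 'f tm = Var nat | Fn 'f "'f tm list"

datatype ('f, 'r) fm =
    Eq "'f tm" "'f tm"
  | Rel 'r "'f tm list"
  | Neg "('f, 'r) fm"
  | Conj "('f, 'r) fm" "('f, 'r) fm"
  | Ex nat "('f, 'r) fm"

fun wf_tm :: "('f \<Rightarrow> nat) \<Rightarrow> 'f tm \<Rightarrow> bool" where
  "wf_tm fa (Var n) = True"
| "wf_tm fa (Fn f ts) = (length ts = fa f \<and> (\<forall>t\<in>set ts. wf_tm fa t))"

fun wf_fm :: "('f \<Rightarrow> nat) \<Rightarrow> ('r \<Rightarrow> nat) \<Rightarrow> ('f, 'r) fm \<Rightarrow> bool" where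
  "wf_fm fa ra (Eq s t) = (wf_tm fa s \<and> wf_tm fa t)"
| "wf_fm fa ra (Rel r ts) = (length ts = ra r \<and> (\<forall>t\<in>set ts. wf_tm fa t))"
| "wf_fm fa ra (Neg \<phi>) = wf_fm fa ra \<phi>"
| "wf_fm fa ra (Conj \<phi> \<psi>) = (wf_fm fa ra \<phi> \<and> wf_fm fa ra \<psi>)"
| "wf_fm fa ra (Ex n \<phi>) = wf_fm fa ra \<phi>"

fun fv_tm :: "'f tm \<Rightarrow> nat set" where
  "fv_tm (Var n) = {n}"
| "fv_tm (Fn f ts) = (\<Union>t\<in>set ts. fv_tm t)"

fun fv :: "('f, 'r) fm \<Rightarrow> nat set" where
  "fv (Eq s t) = fv_tm s \<union> fv_tm t"
| "fv (Rel r ts) = (\<Union>t\<in>set ts. fv_tm t)"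
| "fv (Neg \<phi>) = fv \<phi>"
| "fv (Conj \<phi> \<psi>) = fv \<phi> \<union> fv \<psi>"
| "fv (Ex n \<phi>) = fv \<phi> - {n}"

text \<open>An L-structure with universe the whole type 'm.\<close>

record ('f, 'r, 'm) struc =
  fint :: "'f \<Rightarrow> 'm list \<Rightarrow> 'm"
  rint :: "'r \<Rightarrow> 'm list \<Rightarrow> bool"

fun eval :: "('f, 'r, 'm) struc \<Rightarrow> (nat \<Rightarrow> 'm) \<Rightarrow> 'f tm \<Rightarrow> 'm" where
  "eval M e (Var n) = e n"
| "eval M e (Fn f ts) = fint M f (map (eval M e) ts)"

fun sat :: "('f, 'r, 'm) struc \<Rightarrow> (nat \<Rightarrow> 'm) \<Rightarrow> ('f, 'r) fm \<Rightarrow> bool" where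
  "sat M e (Eq s t) = (eval M e s = eval M e t)"
| "sat M e (Rel r ts) = rint M r (map (eval M e) ts)"
| "sat M e (Neg \<phi>) = (\<not> sat M e \<phi>)"
| "sat M e (Conj \<phi> \<psi>) = (sat M e \<phi> \<and> sat M e \<psi>)"
| "sat M e (Ex n \<phi>) = (\<exists>m. sat M (e(n := m)) \<phi>)"

text \<open>Saturation: every finitely satisfiable set of L(A)-formulas in the free variable 0,
  with |A| < |U|, is realized. A formula over A is a pair (psi, e) where e assigns
  elements of A to the free variables of psi other than 0.\<close>

definition saturated :: "('f \<Rightarrow> nat) \<Rightarrow> ('r \<Rightarrow> nat) \<Rightarrow> ('f, 'r, 'm) struc \<Rightarrow> bool" where
  "saturated fa ra M \<longleftrightarrow>
     (\<forall>(A :: 'm set) (p :: (('f, 'r) fm \<times> (nat \<Rightarrow> 'm)) set).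
        (\<nexists>g :: 'm \<Rightarrow> 'm. inj g \<and> range g \<subseteq> A)
        \<and> (\<forall>(\<psi>, e) \<in> p. wf_fm fa ra \<psi> \<and> (\<forall>v \<in> fv \<psi> - {0}. e v \<in> A))
        \<and> (\<forall>F \<subseteq> p. finite F \<longrightarrow> (\<exists>d. \<forall>(\<psi>, e) \<in> F. sat M (e(0 := d)) \<psi>))
        \<longrightarrow> (\<exists>d. \<forall>(\<psi>, e) \<in> p. sat M (e(0 := d)) \<psi>))"

text \<open>A monster model: saturated, of cardinality strictly bigger than |L| + aleph_0.
  Its complete theory T is Th(M).\<close>

definition monster :: "('f \<Rightarrow> nat) \<Rightarrow> ('r \<Rightarrow> nat) \<Rightarrow> ('f, 'r, 'm) struc \<Rightarrow> bool" where
  "monster fa ra M \<longleftrightarrow> saturated fa ra M \<and> (\<nexists>g :: 'm \<Rightarrow> 'f + 'r + nat. inj g)"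

text \<open>phi(x,y) with x = (v_0,...,v_(k-1)) and y = (v_k,...,v_(k+l-1)); tuples are lists.\<close>

definition holds :: "('f, 'r, 'm) struc \<Rightarrow> nat \<Rightarrow> ('f, 'r) fm \<Rightarrow> 'm list \<Rightarrow> 'm list \<Rightarrow> bool" where
  "holds M k \<phi> a b = sat M (\<lambda>v. if v < k then a ! v else b ! (v - k)) \<phi>"

definition NIP :: "('f, 'r, 'm) struc \<Rightarrow> nat \<Rightarrow> nat \<Rightarrow> ('f, 'r) fm \<Rightarrow> bool" where
  "NIP M k l \<phi> \<longleftrightarrow>
     \<not> (\<exists>a :: nat \<Rightarrow> 'm list. (\<forall>i. length (a i) = k) \<and>
          (\<forall>S :: nat set. \<exists>b. length b = l \<and> (\<forall>i. holds M k \<phi> (a i) b \<longleftrightarrow> i \<in> S)))"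

text \<open>A complete phi~-type over A is a consistent choice, for every a in A, of phi(a,y) or
  its negation; consistency with T = Th(M) means every finite part is realized in M.
  It is represented by the truth-value function q on A (a point of 2^A).\<close>

definition phi_types ::
  "('f, 'r, 'm) struc \<Rightarrow> nat \<Rightarrow> nat \<Rightarrow> ('f, 'r) fm \<Rightarrow> 'm list set \<Rightarrow> ('m list \<Rightarrow> bool) set" where
  "phi_types M k l \<phi> A =
     {q \<in> PiE A (\<lambda>_. UNIV). \<forall>F \<subseteq> A. finite F \<longrightarrow>
        (\<exists>b. length b = l \<and> (\<forall>a \<in> F. q a = holds M k \<phi> a b))}"

definition phi_type_space ::
  "('f, 'r, 'm) struc \<Rightarrow> nat \<Rightarrow> nat \<Rightarrow> ('f, 'r) fm \<Rightarrow> 'm list set \<Rightarrow> ('m list \<Rightarrow> bool) topology" where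
  "phi_type_space M k l \<phi> A =
     subtopology (product_topology (\<lambda>_. discrete_topology UNIV) A) (phi_types M k l \<phi> A)"

definition usc_on :: "'a topology \<Rightarrow> ('a \<Rightarrow> real) \<Rightarrow> bool" where
  "usc_on X f \<longleftrightarrow> (\<forall>c. openin X {x \<in> topspace X. f x < c})"

definition lsc_on :: "'a topology \<Rightarrow> ('a \<Rightarrow> real) \<Rightarrow> bool" where
  "lsc_on X f \<longleftrightarrow> (\<forall>c. openin X {x \<in> topspace X. f x > c})"

definition bounded_fun_on :: "'a topology \<Rightarrow> ('a \<Rightarrow> real) \<Rightarrow> bool" where
  "bounded_fun_on X f \<longleftrightarrow> (\<exists>B. \<forall>x \<in> topspace X. \<bar>f x\<bar> \<le> B)"

definition bsc_on :: "'a topology \<Rightarrow> ('a \<Rightarrow> real) \<Rightarrow> bool" where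
  "bsc_on X f \<longleftrightarrow> bounded_fun_on X f \<and> (usc_on X f \<or> lsc_on X f)"

definition DBSC :: "'a topology \<Rightarrow> ('a \<Rightarrow> real) \<Rightarrow> bool" where
  "DBSC X f \<longleftrightarrow> (\<exists>F1 F2. bsc_on X F1 \<and> bsc_on X F2 \<and> (\<forall>x \<in> topspace X. f x = F1 x - F2 x))"

end

theory Submission
  imports Defs "HOL-Library.Ramsey"
begin

fun rn_tm :: "(nat \<Rightarrow> nat) \<Rightarrow> 'f tm \<Rightarrow> 'f tm" where
  "rn_tm r (Var n) = Var (r n)"
| "rn_tm r (Fn f ts) = Fn f (map (rn_tm r) ts)"

fun rn :: "(nat \<Rightarrow> nat) \<Rightarrow> ('f, 'r) fm \<Rightarrow> ('f, 'r) fm" where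
  "rn r (Eq s t) = Eq (rn_tm r s) (rn_tm r t)"
| "rn r (Rel p ts) = Rel p (map (rn_tm r) ts)"
| "rn r (Neg \<psi>) = Neg (rn r \<psi>)"
| "rn r (Conj \<psi> \<xi>) = Conj (rn r \<psi>) (rn r \<xi>)"
| "rn r (Ex n \<psi>) = Ex (r n) (rn r \<psi>)"

lemma eval_rn: "eval M e (rn_tm r t) = eval M (\<lambda>v. e (r v)) t"
  by (induction t) (auto intro!: arg_cong[where f="fint M _"])

lemma wf_rn_tm: "wf_tm fa (rn_tm r t) = wf_tm fa t"
  by (induction t) auto

lemma wf_rn: "wf_fm fa ra (rn r \<psi>) = wf_fm fa ra \<psi>"
  by (induction \<psi>) (auto simp: wf_rn_tm)

lemma sat_rn: "inj r \<Longrightarrow> sat M e (rn r \<psi>) = sat M (\<lambda>v. e (r v)) \<psi>"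
proof (induction \<psi> arbitrary: e)
  case (Ex n \<psi>)
  have eq: "\<And>m. (\<lambda>v. (e(r n := m)) (r v)) = (\<lambda>v. e (r v))(n := m)"
    using Ex.prems by (auto simp: inj_def)
  have "sat M e (rn r (Ex n \<psi>)) = (\<exists>m. sat M (\<lambda>v. (e(r n := m)) (r v)) \<psi>)"
    by (simp only: rn.simps sat.simps Ex.IH[OF Ex.prems])
  also have "\<dots> = sat M (\<lambda>v. e (r v)) (Ex n \<psi>)" by (simp only: eq sat.simps)
  finally show ?case .
qed (auto simp: eval_rn comp_def)

lemma eval_cong: "(\<forall>v\<in>fv_tm t. e v = e' v) \<Longrightarrow> eval M e t = eval M e' t"
  by (induction t) (auto intro!: arg_cong[where f="fint M _"])

lemma sat_cong: "(\<forall>v\<in>fv \<psi>. e v = e' v) \<Longrightarrow> sat M e \<psi> = sat M e' \<psi>"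
proof (induction \<psi> arbitrary: e e')
  case (Eq s t) then show ?case using eval_cong[of s e e' M] eval_cong[of t e e' M] by auto
next
  case (Rel p ts)
  have "map (eval M e) ts = map (eval M e') ts"
  proof (intro map_cong refl)
    fix t assume "t \<in> set ts"
    then show "eval M e t = eval M e' t" using Rel.prems by (intro eval_cong) auto
  qed
  then show ?case by (simp only: sat.simps)
next
  case (Ex n \<psi>)
  have "\<And>m. sat M (e(n := m)) \<psi> = sat M (e'(n := m)) \<psi>"
    using Ex.IH Ex.prems by auto
  then show ?case by simp
next
  case (Conj \<psi>1 \<psi>2)
  have "sat M e \<psi>1 = sat M e' \<psi>1" using Conj.IH(1) Conj.prems by auto
  moreover have "sat M e \<psi>2 = sat M e' \<psi>2" using Conj.IH(2) Conj.prems by auto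
  ultimately show ?case by simp
qed auto

definition defb :: "('f \<Rightarrow> nat) \<Rightarrow> ('r \<Rightarrow> nat) \<Rightarrow> ('f, 'r, 'm) struc \<Rightarrow> nat set \<Rightarrow> 'm set
   \<Rightarrow> ((nat \<Rightarrow> 'm) \<Rightarrow> bool) \<Rightarrow> bool" where
  "defb fa ra M V A P \<longleftrightarrow> (\<exists>\<psi> e. wf_fm fa ra \<psi> \<and> (\<forall>v. e v \<in> A) \<and>
      (\<forall>d. P d = sat M (\<lambda>v. if v \<in> V then d v else e v) \<psi>))"

lemma defb_mono: "defb fa ra M V A P \<Longrightarrow> A \<subseteq> B \<Longrightarrow> defb fa ra M V B P"
  unfolding defb_def by blast

lemma defb_neg: "defb fa ra M V A P \<Longrightarrow> defb fa ra M V A (\<lambda>d. \<not> P d)"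
  unfolding defb_def by (metis sat.simps(3) wf_fm.simps(3))

lemma defb_true: "c \<in> A \<Longrightarrow> defb fa ra M V A (\<lambda>d. True)"
  unfolding defb_def
  by (rule exI[of _ "Eq (Var 0) (Var 0)"], rule exI[of _ "\<lambda>_. c"]) simp

lemma inj_aux:
  fixes V :: "nat set" and N b :: nat
  assumes "\<forall>v\<in>V. v < N" shows "inj (\<lambda>v. if v \<in> V then v else N + 2 * v + b)"
proof (rule injI)
  fix x y assume a: "(if x \<in> V then x else N + 2 * x + b) = (if y \<in> V then y else N + 2 * y + b)"
  show "x = y" using a assms by (cases "x \<in> V"; cases "y \<in> V") force+
qed

lemma defb_conj:
  assumes "finite V" "defb fa ra M V A P" "defb fa ra M V A Q"
  shows "defb fa ra M V A (\<lambda>d. P d \<and> Q d)"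
proof -
  obtain \<psi>1 e1 where 1: "wf_fm fa ra \<psi>1" "\<forall>v. e1 v \<in> A"
    "\<forall>d. P d = sat M (\<lambda>v. if v \<in> V then d v else e1 v) \<psi>1"
    using assms(2) unfolding defb_def by blast
  obtain \<psi>2 e2 where 2: "wf_fm fa ra \<psi>2" "\<forall>v. e2 v \<in> A"
    "\<forall>d. Q d = sat M (\<lambda>v. if v \<in> V then d v else e2 v) \<psi>2"
    using assms(3) unfolding defb_def by blast
  obtain N where N: "\<forall>v\<in>V. v < N" using assms(1) finite_nat_bounded by (metis lessThan_iff subsetD)
  define r1 where "r1 = (\<lambda>v::nat. if v \<in> V then v else N + 2 * v)"
  define r2 where "r2 = (\<lambda>v::nat. if v \<in> V then v else N + 2 * v + 1)"
  define e where "e = (\<lambda>w. if N \<le> w then (if even (w - N) then e1 ((w - N) div 2) else e2 ((w - N) div 2)) else e1 w)"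
  have i1: "inj r1" using inj_aux[OF N, of 0] unfolding r1_def add_0_right .
  have i2: "inj r2" using inj_aux[OF N, of 1] unfolding r2_def .
  have eA: "\<forall>v. e v \<in> A" unfolding e_def using 1 2 by auto
  have c1: "(\<lambda>w. (\<lambda>v. if v \<in> V then d v else e v) (r1 w)) = (\<lambda>v. if v \<in> V then d v else e1 v)" for d
  proof
    fix w show "(\<lambda>v. if v \<in> V then d v else e v) (r1 w) = (if w \<in> V then d w else e1 w)"
    proof (cases "w \<in> V")
      case True then show ?thesis unfolding r1_def by simp
    next
      case False
      then have "N + 2 * w \<notin> V" using N by force
      then show ?thesis using False unfolding r1_def e_def by simp
    qed
  qed
  have c2: "(\<lambda>w. (\<lambda>v. if v \<in> V then d v else e v) (r2 w)) = (\<lambda>v. if v \<in> V then d v else e2 v)" for d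
  proof
    fix w show "(\<lambda>v. if v \<in> V then d v else e v) (r2 w) = (if w \<in> V then d w else e2 w)"
    proof (cases "w \<in> V")
      case True then show ?thesis unfolding r2_def by simp
    next
      case False
      then have "N + 2 * w + 1 \<notin> V" using N by force
      then show ?thesis using False unfolding r2_def e_def by simp
    qed
  qed
  show ?thesis unfolding defb_def
  proof (rule exI[of _ "Conj (rn r1 \<psi>1) (rn r2 \<psi>2)"], rule exI[of _ e], intro conjI allI)
    show "wf_fm fa ra (Conj (rn r1 \<psi>1) (rn r2 \<psi>2))" using 1 2 by (simp add: wf_rn)
    show "e v \<in> A" for v using eA by simp
    fix d
    show "(P d \<and> Q d) = sat M (\<lambda>v. if v \<in> V then d v else e v) (Conj (rn r1 \<psi>1) (rn r2 \<psi>2))"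
      using 1(3) 2(3) by (simp only: sat.simps sat_rn[OF i1] sat_rn[OF i2] c1 c2)
  qed
qed

lemma defb_conj_fin:
  assumes "finite V" "c \<in> A" "finite I" "\<forall>i\<in>I. defb fa ra M V A (P i)"
  shows "defb fa ra M V A (\<lambda>d. \<forall>i\<in>I. P i d)"
  using assms(3,4)
proof (induction I rule: finite_induct)
  case empty then show ?case using defb_true[OF assms(2)] by simp
next
  case (insert x F)
  then have "defb fa ra M V A (\<lambda>d. P x d \<and> (\<forall>i\<in>F. P i d))"
    by (intro defb_conj assms(1)) auto
  then show ?case by simp
qed

lemma defb_ex1:
  assumes "defb fa ra M V A P" "v \<in> V"
  shows "defb fa ra M (V - {v}) A (\<lambda>d. \<exists>x. P (d(v := x)))"
proof -
  obtain \<psi> e where 1: "wf_fm fa ra \<psi>" "\<forall>v. e v \<in> A"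
    "\<forall>d. P d = sat M (\<lambda>v. if v \<in> V then d v else e v) \<psi>"
    using assms(1) unfolding defb_def by blast
  have c: "(\<lambda>w. if w \<in> V - {v} then d w else e w)(v := x) = (\<lambda>w. if w \<in> V then (d(v := x)) w else e w)" for d x
    using assms(2) by auto
  show ?thesis unfolding defb_def
  proof (rule exI[of _ "Ex v \<psi>"], rule exI[of _ e], intro conjI allI)
    show "wf_fm fa ra (Ex v \<psi>)" using 1 by simp
    show "e w \<in> A" for w using 1(2) by simp
    fix d
    show "(\<exists>x. P (d(v := x))) = sat M (\<lambda>w. if w \<in> V - {v} then d w else e w) (Ex v \<psi>)"
      by (simp only: sat.simps c 1(3))
  qed
qed

lemma defb_exs:
  assumes "finite W" "W \<subseteq> V" "defb fa ra M V A P"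
  shows "defb fa ra M (V - W) A (\<lambda>d. \<exists>d'. P (\<lambda>v. if v \<in> W then d' v else d v))"
  using assms(1,2)
proof (induction W rule: finite_induct)
  case empty then show ?case using assms(3) by simp
next
  case (insert w W)
  have "defb fa ra M (V - W - {w}) A
      (\<lambda>d. \<exists>x. \<exists>d'. P (\<lambda>v. if v \<in> W then d' v else (d(w := x)) v))"
    using insert by (intro defb_ex1) auto
  moreover have "(\<exists>x. \<exists>d'. P (\<lambda>v. if v \<in> W then d' v else (d(w := x)) v)) =
      (\<exists>d'. P (\<lambda>v. if v \<in> insert w W then d' v else d v))" for d
  proof
    assume "\<exists>x d'. P (\<lambda>v. if v \<in> W then d' v else (d(w := x)) v)"
    then obtain x d' where "P (\<lambda>v. if v \<in> W then d' v else (d(w := x)) v)" by blast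
    moreover have "(\<lambda>v. if v \<in> W then d' v else (d(w := x)) v) =
        (\<lambda>v. if v \<in> insert w W then (d'(w := x)) v else d v)"
      using insert.hyps(2) by auto
    ultimately show "\<exists>d'. P (\<lambda>v. if v \<in> insert w W then d' v else d v)" by auto
  next
    assume "\<exists>d'. P (\<lambda>v. if v \<in> insert w W then d' v else d v)"
    then obtain d' where "P (\<lambda>v. if v \<in> insert w W then d' v else d v)" by blast
    moreover have "(\<lambda>v. if v \<in> insert w W then d' v else d v) =
        (\<lambda>v. if v \<in> W then d' v else (d(w := d' w)) v)"
      by auto
    ultimately show "\<exists>x d'. P (\<lambda>v. if v \<in> W then d' v else (d(w := x)) v)" by metis
  qed
  moreover have "V - W - {w} = V - insert w W" by auto
  ultimately show ?case by simp
qed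

lemma inj_aux2:
  fixes g :: "nat \<Rightarrow> nat" and N :: nat
  assumes g: "\<And>v. P v \<Longrightarrow> g v < N" and gi: "inj_on g {v. P v}"
  shows "inj (\<lambda>v. if P v then g v else N + v)"
proof (rule injI)
  fix x y assume a: "(if P x then g x else N + x) = (if P y then g y else N + y)"
  show "x = y"
  proof (cases "P x")
    case True
    show ?thesis
    proof (cases "P y")
      case True
      then have "g x = g y" using a \<open>P x\<close> by simp
      then show ?thesis using inj_onD[OF gi] \<open>P x\<close> True by blast
    next
      case False
      then have "g x = N + y" using a \<open>P x\<close> by simp
      then show ?thesis using g[OF \<open>P x\<close>] by simp
    qed
  next
    case False
    show ?thesis
    proof (cases "P y")
      case True
      then have "g y = N + x" using a False by simp
      then show ?thesis using g[OF True] by simp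
    next
      case F2: False
      then show ?thesis using a False by simp
    qed
  qed
qed

lemma defb_atom:
  assumes "wf_fm fa ra \<psi>" "fv \<psi> \<subseteq> {..<K}" "c0 \<in> A" "finite V"
    and h: "\<forall>v<K. (case h v of Inl p \<Rightarrow> p \<in> V | Inr c \<Rightarrow> c \<in> A)"
    and hi: "inj_on h {v. v < K \<and> isl (h v)}"
  shows "defb fa ra M V A (\<lambda>d. sat M (\<lambda>v. case h v of Inl p \<Rightarrow> d p | Inr c \<Rightarrow> c) \<psi>)"
proof -
  obtain N where N: "\<forall>v\<in>V. v < N" using assms(4) finite_nat_bounded[of V] by auto
  define r where "r = (\<lambda>v. if v < K \<and> isl (h v) then projl (h v) else N + v)"
  define e where "e = (\<lambda>w. if N \<le> w \<and> w - N < K \<and> \<not> isl (h (w - N)) then projr (h (w - N)) else c0)"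
  have inV: "v < K \<Longrightarrow> isl (h v) \<Longrightarrow> projl (h v) \<in> V" for v
    using h by (cases "h v") auto
  have ir: "inj r" unfolding r_def
  proof (rule inj_aux2)
    show "projl (h v) < N" if "v < K \<and> isl (h v)" for v using inV[of v] that N by auto
    show "inj_on (\<lambda>v. projl (h v)) {v. v < K \<and> isl (h v)}"
    proof (rule inj_onI)
      fix x y assume x: "x \<in> {v. v < K \<and> isl (h v)}" and y: "y \<in> {v. v < K \<and> isl (h v)}"
        and xy: "projl (h x) = projl (h y)"
      have "h x = Inl (projl (h x))" "h y = Inl (projl (h y))" using x y by simp_all
      then have "h x = h y" using xy by metis
      then show "x = y" using inj_onD[OF hi] x y by blast
    qed
  qed
  have eA: "\<forall>w. e w \<in> A"
  proof
    fix w
    show "e w \<in> A"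
    proof (cases "N \<le> w \<and> w - N < K \<and> \<not> isl (h (w - N))")
      case True
      then show ?thesis using h[rule_format, of "w - N"] unfolding e_def by (cases "h (w - N)") auto
    qed (auto simp: e_def assms(3))
  qed
  show ?thesis unfolding defb_def
  proof (rule exI[of _ "rn r \<psi>"], rule exI[of _ e], intro conjI allI)
    show "wf_fm fa ra (rn r \<psi>)" using assms(1) by (simp add: wf_rn)
    show "e v \<in> A" for v using eA by simp
    fix d
    have "sat M (\<lambda>v. if v \<in> V then d v else e v) (rn r \<psi>) =
        sat M (\<lambda>w. (\<lambda>v. if v \<in> V then d v else e v) (r w)) \<psi>" by (rule sat_rn[OF ir])
    also have "\<dots> = sat M (\<lambda>v. case h v of Inl p \<Rightarrow> d p | Inr c \<Rightarrow> c) \<psi>"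
    proof (rule sat_cong, intro ballI)
      fix v assume "v \<in> fv \<psi>"
      then have vK: "v < K" using assms(2) by auto
      show "(\<lambda>v. if v \<in> V then d v else e v) (r v) = (case h v of Inl p \<Rightarrow> d p | Inr c \<Rightarrow> c)"
      proof (cases "h v")
        case (Inl p)
        then show ?thesis using vK inV[of v] unfolding r_def by auto
      next
        case (Inr c)
        have "N + v \<notin> V"
        proof
          assume "N + v \<in> V" then have "N + v < N" using N by blast
          then show False by simp
        qed
        then show ?thesis using vK Inr unfolding r_def e_def by auto
      qed
    qed
    finally show "sat M (\<lambda>v. case h v of Inl p \<Rightarrow> d p | Inr c \<Rightarrow> c) \<psi> =
        sat M (\<lambda>v. if v \<in> V then d v else e v) (rn r \<psi>)" by (rule sym)
  qed
qed

lemma countable_no_inj: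
  fixes M :: "('f, 'r, 'm) struc"
  assumes "monster fa ra M" "countable B"
  shows "\<not> (\<exists>g :: 'm \<Rightarrow> 'm. inj g \<and> range g \<subseteq> B)"
proof
  assume "\<exists>g :: 'm \<Rightarrow> 'm. inj g \<and> range g \<subseteq> B"
  then obtain g :: "'m \<Rightarrow> 'm" where g: "inj g" "range g \<subseteq> B" by blast
  have "countable (range g)" using g(2) assms(2) countable_subset by blast
  then have "countable (UNIV :: 'm set)" using g(1) countable_image_inj_on by blast
  then obtain f :: "'m \<Rightarrow> nat" where f: "inj f" by (metis countableE)
  have "inj (\<lambda>x. Inr (Inr (f x)) :: 'f + 'r + nat)" using f by (auto simp: inj_def)
  then show False using assms(1) unfolding monster_def by blast
qed

lemma realize_dir:
  fixes M :: "('f, 'r, 'm) struc"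
  assumes mon: "monster fa ra M" and A: "countable A" and fin: "finite V"
  shows "\<And>PP. \<forall>P\<in>PP. defb fa ra M V A P \<Longrightarrow>
      (\<forall>G\<subseteq>PP. finite G \<longrightarrow> (\<exists>R\<in>PP. \<forall>d. R d \<longrightarrow> (\<forall>P\<in>G. P d))) \<Longrightarrow>
      (\<forall>P\<in>PP. \<exists>d. P d) \<Longrightarrow> \<exists>d. \<forall>P\<in>PP. P d"
  using fin
proof (induction V rule: finite_induct)
  case empty
  show ?case
  proof (intro exI ballI)
    fix P assume P: "P \<in> PP"
    obtain \<psi> e where pe: "\<forall>d. P d = sat M (\<lambda>v. if v \<in> {} then d v else e v) \<psi>"
      using empty.prems(1) P unfolding defb_def by blast
    obtain d where "P d" using empty.prems(3) P by blast
    then show "P undefined" using pe by simp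
  qed
next
  case (insert v V)
  define g where "g = (\<lambda>(R :: (nat \<Rightarrow> 'm) \<Rightarrow> bool) d. \<exists>x. R (d(v := x)))"
  have gmono: "\<And>R P d. (\<forall>d. R d \<longrightarrow> P d) \<Longrightarrow> g R d \<Longrightarrow> g P d" unfolding g_def by blast
  have Q1: "\<forall>Q\<in>g ` PP. defb fa ra M V A Q"
  proof
    fix Q assume "Q \<in> g ` PP"
    then obtain R where R: "R \<in> PP" "Q = g R" by blast
    have "defb fa ra M (insert v V - {v}) A (\<lambda>d. \<exists>x. R (d(v := x)))"
      using insert.prems(1) R(1) by (intro defb_ex1) auto
    moreover have "insert v V - {v} = V" using insert.hyps(2) by auto
    ultimately show "defb fa ra M V A Q" using R(2) unfolding g_def by simp
  qed
  have Q2: "\<forall>G\<subseteq>g ` PP. finite G \<longrightarrow> (\<exists>R\<in>g ` PP. \<forall>d. R d \<longrightarrow> (\<forall>P\<in>G. P d))"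
  proof (intro allI impI)
    fix G assume G: "G \<subseteq> g ` PP" "finite G"
    obtain G' where G': "G' \<subseteq> PP" "finite G'" "G = g ` G'"
      using finite_subset_image[OF G(2) G(1)] by blast
    then obtain R where R: "R \<in> PP" "\<forall>d. R d \<longrightarrow> (\<forall>P\<in>G'. P d)" using insert.prems(2) by blast
    have "\<forall>d. g R d \<longrightarrow> (\<forall>P\<in>G. P d)"
    proof (intro allI impI ballI)
      fix d P assume "g R d" "P \<in> G"
      then obtain P' where "P' \<in> G'" "P = g P'" using G' by blast
      then show "P d" using gmono[of R P' d] R(2) \<open>g R d\<close> by blast
    qed
    then show "\<exists>R\<in>g ` PP. \<forall>d. R d \<longrightarrow> (\<forall>P\<in>G. P d)" using R(1) by blast
  qed
  have Q3: "\<forall>Q\<in>g ` PP. \<exists>d. Q d"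
  proof
    fix Q assume "Q \<in> g ` PP"
    then obtain R where R: "R \<in> PP" "Q = g R" by blast
    then obtain d where "R d" using insert.prems(3) by blast
    then have "R (d(v := d v))" by simp
    then show "\<exists>d. Q d" unfolding R(2) g_def by blast
  qed
  obtain d0 where d0: "\<forall>Q\<in>g ` PP. Q d0" using insert.IH[OF Q1 Q2 Q3] by blast
  have "\<forall>R\<in>PP. \<exists>pe. wf_fm fa ra (fst pe) \<and> (\<forall>w. snd pe w \<in> A) \<and>
      (\<forall>d. R d = sat M (\<lambda>w. if w \<in> insert v V then d w else snd pe w) (fst pe))"
  proof
    fix R assume "R \<in> PP"
    then obtain \<psi> e where "wf_fm fa ra \<psi>" "\<forall>w. e w \<in> A"
      "\<forall>d. R d = sat M (\<lambda>w. if w \<in> insert v V then d w else e w) \<psi>"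
      using insert.prems(1) unfolding defb_def by blast
    then show "\<exists>pe. wf_fm fa ra (fst pe) \<and> (\<forall>w. snd pe w \<in> A) \<and>
      (\<forall>d. R d = sat M (\<lambda>w. if w \<in> insert v V then d w else snd pe w) (fst pe))"
      by (intro exI[of _ "(\<psi>, e)"]) (simp only: fst_conv snd_conv, blast)
  qed
  from bchoice[OF this] obtain PE where PE: "\<forall>R\<in>PP. wf_fm fa ra (fst (PE R)) \<and> (\<forall>w. snd (PE R) w \<in> A) \<and>
      (\<forall>d. R d = sat M (\<lambda>w. if w \<in> insert v V then d w else snd (PE R) w) (fst (PE R)))"
    by blast
  define \<rho> where "\<rho> = (\<lambda>w. if w = v then 0 else Suc w)"
  have i\<rho>: "inj \<rho>" unfolding \<rho>_def inj_def by auto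
  define E where "E = (\<lambda>R u. case u of 0 \<Rightarrow> snd (PE R) 0 | Suc w \<Rightarrow> if w \<in> V then d0 w else snd (PE R) w)"
  define A' where "A' = A \<union> d0 ` V"
  define p where "p = (\<lambda>R. (rn \<rho> (fst (PE R)), E R)) ` PP"
  have key: "sat M ((E R)(0 := x)) (rn \<rho> (fst (PE R))) = R (d0(v := x))" if R: "R \<in> PP" for R x
  proof -
    have e1: "sat M ((E R)(0 := x)) (rn \<rho> (fst (PE R))) = sat M (\<lambda>w. ((E R)(0 := x)) (\<rho> w)) (fst (PE R))"
      by (rule sat_rn[OF i\<rho>])
    have e2: "(\<lambda>w. ((E R)(0 := x)) (\<rho> w)) = (\<lambda>w. if w \<in> insert v V then (d0(v := x)) w else snd (PE R) w)"
    proof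
      fix w show "((E R)(0 := x)) (\<rho> w) = (if w \<in> insert v V then (d0(v := x)) w else snd (PE R) w)"
        using insert.hyps(2) unfolding \<rho>_def E_def by (cases "w = v") auto
    qed
    have e3: "R (d0(v := x)) = sat M (\<lambda>w. if w \<in> insert v V then (d0(v := x)) w else snd (PE R) w) (fst (PE R))"
      using PE R by blast
    show ?thesis unfolding e1 e2 e3 ..
  qed
  have sat: "saturated fa ra M" using mon unfolding monster_def by blast
  have "countable (d0 ` V)" using insert.hyps(1) by (simp add: countable_finite)
  then have "countable A'" unfolding A'_def using A by (rule countable_Un[rotated])
  then have c1: "\<not> (\<exists>g :: 'm \<Rightarrow> 'm. inj g \<and> range g \<subseteq> A')"
    by (rule countable_no_inj[OF mon])
  have c2: "\<forall>(\<psi>, e) \<in> p. wf_fm fa ra \<psi> \<and> (\<forall>w \<in> fv \<psi> - {0}. e w \<in> A')"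
  proof
    fix pe assume "pe \<in> p"
    then obtain R where R: "R \<in> PP" "pe = (rn \<rho> (fst (PE R)), E R)" unfolding p_def by blast
    have "wf_fm fa ra (rn \<rho> (fst (PE R)))" using PE R(1) by (simp add: wf_rn)
    moreover have "E R w \<in> A'" for w using PE R(1) unfolding E_def A'_def by (cases w) auto
    ultimately show "case pe of (\<psi>, e) \<Rightarrow> wf_fm fa ra \<psi> \<and> (\<forall>w \<in> fv \<psi> - {0}. e w \<in> A')"
      using R(2) by simp
  qed
  have c3: "\<forall>F \<subseteq> p. finite F \<longrightarrow> (\<exists>x. \<forall>(\<psi>, e) \<in> F. sat M (e(0 := x)) \<psi>)"
  proof (intro allI impI)
    fix F assume F: "F \<subseteq> p" "finite F"
    obtain G' where G': "G' \<subseteq> PP" "finite G'" "F = (\<lambda>R. (rn \<rho> (fst (PE R)), E R)) ` G'"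
      using finite_subset_image[OF F(2) F(1)[unfolded p_def]] by blast
    then obtain R where R: "R \<in> PP" "\<forall>d. R d \<longrightarrow> (\<forall>P\<in>G'. P d)" using insert.prems(2) by blast
    then have "g R d0" using d0 by blast
    then obtain x where x: "R (d0(v := x))" unfolding g_def by blast
    have "\<forall>(\<psi>, e) \<in> F. sat M (e(0 := x)) \<psi>"
    proof
      fix pe assume "pe \<in> F"
      then obtain P where P: "P \<in> G'" "pe = (rn \<rho> (fst (PE P)), E P)" using G'(3) by blast
      have "P (d0(v := x))" using R(2) x P(1) by blast
      then show "case pe of (\<psi>, e) \<Rightarrow> sat M (e(0 := x)) \<psi>" using key[of P x] P G'(1) by auto
    qed
    then show "\<exists>x. \<forall>(\<psi>, e) \<in> F. sat M (e(0 := x)) \<psi>" by blast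
  qed
  have "\<exists>x. \<forall>(\<psi>, e) \<in> p. sat M (e(0 := x)) \<psi>"
    using sat[unfolded saturated_def, rule_format, of A' p] c1 c2 c3 by blast
  then obtain x where x: "\<forall>(\<psi>, e) \<in> p. sat M (e(0 := x)) \<psi>" by blast
  show ?case
  proof (intro exI ballI)
    fix R assume R: "R \<in> PP"
    then have "(rn \<rho> (fst (PE R)), E R) \<in> p" unfolding p_def by blast
    then have "sat M ((E R)(0 := x)) (rn \<rho> (fst (PE R)))" using x by fastforce
    then show "R (d0(v := x))" using key[OF R] by simp
  qed
qed

lemma realize:
  fixes M :: "('f, 'r, 'm) struc"
  assumes mon: "monster fa ra M" and A: "countable A" "c \<in> A" and fin: "finite V"
    and PP: "\<forall>P\<in>PP. defb fa ra M V A P"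
    and fs: "\<forall>F\<subseteq>PP. finite F \<longrightarrow> (\<exists>d. \<forall>P\<in>F. P d)"
  shows "\<exists>d. \<forall>P\<in>PP. P d"
proof -
  define cj where "cj = (\<lambda>F (d :: nat \<Rightarrow> 'm). \<forall>P\<in>F. P d)"
  define PC where "PC = cj ` {F. F \<subseteq> PP \<and> finite F}"
  have 1: "\<forall>P\<in>PC. defb fa ra M V A P"
  proof
    fix P assume "P \<in> PC"
    then obtain F where F: "F \<subseteq> PP" "finite F" "P = cj F" unfolding PC_def by blast
    have "defb fa ra M V A (\<lambda>d. \<forall>Q\<in>F. (\<lambda>Q. Q) Q d)"
      using F PP by (intro defb_conj_fin[OF fin A(2)]) auto
    then show "defb fa ra M V A P" unfolding F(3) cj_def by simp
  qed
  have 2: "\<forall>G\<subseteq>PC. finite G \<longrightarrow> (\<exists>R\<in>PC. \<forall>d. R d \<longrightarrow> (\<forall>P\<in>G. P d))"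
  proof (intro allI impI)
    fix G assume G: "G \<subseteq> PC" "finite G"
    obtain G' where G': "G' \<subseteq> {F. F \<subseteq> PP \<and> finite F}" "finite G'" "G = cj ` G'"
      using finite_subset_image[OF G(2) G(1)[unfolded PC_def]] by blast
    have "\<Union>G' \<subseteq> PP" "finite (\<Union>G')" using G' by auto
    then have "cj (\<Union>G') \<in> PC" unfolding PC_def by blast
    moreover have "\<forall>d. cj (\<Union>G') d \<longrightarrow> (\<forall>P\<in>G. P d)" using G'(3) unfolding cj_def by auto
    ultimately show "\<exists>R\<in>PC. \<forall>d. R d \<longrightarrow> (\<forall>P\<in>G. P d)" by blast
  qed
  have 3: "\<forall>P\<in>PC. \<exists>d. P d"
  proof
    fix P assume "P \<in> PC"
    then obtain F where F: "F \<subseteq> PP" "finite F" "P = cj F" unfolding PC_def by blast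
    then obtain d where "\<forall>Q\<in>F. Q d" using fs by blast
    then show "\<exists>d. P d" unfolding F(3) cj_def by blast
  qed
  obtain d where d: "\<forall>P\<in>PC. P d" using realize_dir[OF mon A(1) fin 1 2 3] by blast
  have "\<forall>P\<in>PP. P d"
  proof
    fix P assume "P \<in> PP"
    then have "cj {P} \<in> PC" unfolding PC_def by blast
    then show "P d" using d unfolding cj_def by auto
  qed
  then show ?thesis by blast
qed

definition xsq :: "nat \<Rightarrow> (nat \<Rightarrow> 'm) \<Rightarrow> nat \<Rightarrow> 'm list" where
  "xsq k D i = map (\<lambda>v. D (k * i + v)) [0..<k]"

definition Sh :: "('f, 'r, 'm) struc \<Rightarrow> nat \<Rightarrow> nat \<Rightarrow> ('f, 'r) fm \<Rightarrow> (nat \<Rightarrow> 'm) \<Rightarrow> nat \<Rightarrow> bool" where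
  "Sh M k l \<phi> D n \<longleftrightarrow> (\<forall>S \<subseteq> {..<n}. \<exists>b. length b = l \<and> (\<forall>i<n. holds M k \<phi> (xsq k D i) b = (i \<in> S)))"

definition src :: "(nat \<Rightarrow> 'm) \<Rightarrow> nat + 'm \<Rightarrow> 'm" where
  "src d s = (case s of Inl p \<Rightarrow> d p | Inr c \<Rightarrow> c)"

lemma lt_block: "i < n \<Longrightarrow> v < k \<Longrightarrow> k * i + v < k * (n::nat)"
proof -
  assume "i < n" "v < k"
  then have "k * i + v < k * Suc i" by simp
  also have "k * Suc i \<le> k * n" using \<open>i < n\<close> by (intro mult_le_mono2) simp
  finally show ?thesis .
qed

lemma length_xsq[simp]: "length (xsq k D i) = k" unfolding xsq_def by simp

lemma xsq_cong: assumes "\<forall>p < k * n. D1 p = D2 p" "i < n" shows "xsq k D1 i = xsq k D2 i"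
  unfolding xsq_def
proof (rule map_cong[OF refl])
  fix v assume "v \<in> set [0..<k]"
  then have "k * i + v < k * n" using lt_block[OF assms(2)] by simp
  then show "D1 (k * i + v) = D2 (k * i + v)" using assms(1) by simp
qed

lemma Sh_cong: "(\<forall>p < k * n. D1 p = D2 p) \<Longrightarrow> Sh M k l \<phi> D1 n = Sh M k l \<phi> D2 n"
  unfolding Sh_def using xsq_cong[of k n D1 D2] by auto

lemma Sh_mono: "Sh M k l \<phi> D m \<Longrightarrow> n \<le> m \<Longrightarrow> Sh M k l \<phi> D n"
  unfolding Sh_def
proof (intro allI impI)
  fix S assume a: "\<forall>S\<subseteq>{..<m}. \<exists>b. length b = l \<and> (\<forall>i<m. holds M k \<phi> (xsq k D i) b = (i \<in> S))"
    "n \<le> m" "S \<subseteq> {..<n}"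
  then have "S \<subseteq> {..<m}" by auto
  then obtain b where "length b = l" "\<forall>i<m. holds M k \<phi> (xsq k D i) b = (i \<in> S)" using a(1) by blast
  then show "\<exists>b. length b = l \<and> (\<forall>i<n. holds M k \<phi> (xsq k D i) b = (i \<in> S))" using a(2) by auto
qed

lemma ex_list: "(\<exists>b. length b = l \<and> P b) \<longleftrightarrow> (\<exists>d'. P (map (\<lambda>w. d' (N + w)) [0..<l]))"
proof
  assume "\<exists>b. length b = l \<and> P b"
  then obtain b where b: "length b = l" "P b" by blast
  have "map (\<lambda>w. (\<lambda>p. b ! (p - N)) (N + w)) [0..<l] = b" using b(1) map_nth[of b] by simp
  then have "P (map (\<lambda>w. (\<lambda>p. b ! (p - N)) (N + w)) [0..<l])" using b(2) by simp
  then show "\<exists>d'. P (map (\<lambda>w. d' (N + w)) [0..<l])" by (intro exI[of _ "\<lambda>p. b ! (p - N)"]) simp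
next
  assume "\<exists>d'. P (map (\<lambda>w. d' (N + w)) [0..<l])"
  then obtain d' where "P (map (\<lambda>w. d' (N + w)) [0..<l])" by blast
  then show "\<exists>b. length b = l \<and> P b" by (intro exI[of _ "map (\<lambda>w. d' (N + w)) [0..<l]"]) simp
qed

lemma defb_holds:
  fixes M :: "('f, 'r, 'm) struc"
  assumes wf: "wf_fm fa ra \<phi>" and fv: "fv \<phi> \<subseteq> {..<k+l}" and c0: "c0 \<in> A" and fin: "finite V"
    and X: "\<forall>v<k. (case X v of Inl p \<Rightarrow> p \<in> V | Inr c \<Rightarrow> c \<in> A)"
    and Y: "\<forall>w<l. (case Y w of Inl p \<Rightarrow> p \<in> V | Inr c \<Rightarrow> c \<in> A)"
    and inj: "inj_on (\<lambda>v. if v < k then X v else Y (v - k)) {v. v < k + l \<and> isl (if v < k then X v else Y (v - k))}"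
  shows "defb fa ra M V A (\<lambda>d. holds M k \<phi> (map (\<lambda>v. src d (X v)) [0..<k]) (map (\<lambda>w. src d (Y w)) [0..<l]))"
proof -
  define h where "h = (\<lambda>v. if v < k then X v else Y (v - k))"
  have "defb fa ra M V A (\<lambda>d. sat M (\<lambda>v. case h v of Inl p \<Rightarrow> d p | Inr c \<Rightarrow> c) \<phi>)"
  proof (rule defb_atom[OF wf fv c0 fin])
    show "\<forall>v<k + l. case h v of Inl p \<Rightarrow> p \<in> V | Inr c \<Rightarrow> c \<in> A"
    proof (intro allI impI)
      fix v assume "v < k + l"
      then show "case h v of Inl p \<Rightarrow> p \<in> V | Inr c \<Rightarrow> c \<in> A"
      proof (cases "v < k")
        case True
        then show ?thesis using X[rule_format, OF True] unfolding h_def by simp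
      next
        case False
        then have vk: "v - k < l" using \<open>v < k + l\<close> by simp
        show ?thesis using Y[rule_format, OF vk] False unfolding h_def by simp
      qed
    qed
    show "inj_on h {v. v < k + l \<and> isl (h v)}" using inj unfolding h_def .
  qed
  moreover have "holds M k \<phi> (map (\<lambda>v. src d (X v)) [0..<k]) (map (\<lambda>w. src d (Y w)) [0..<l]) =
      sat M (\<lambda>v. case h v of Inl p \<Rightarrow> d p | Inr c \<Rightarrow> c) \<phi>" for d
    unfolding holds_def
  proof (rule sat_cong, intro ballI)
    fix v assume "v \<in> fv \<phi>"
    then have "v < k + l" using fv by auto
    then show "(if v < k then map (\<lambda>v. src d (X v)) [0..<k] ! v else map (\<lambda>w. src d (Y w)) [0..<l] ! (v - k)) =
        (case h v of Inl p \<Rightarrow> d p | Inr c \<Rightarrow> c)"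
    proof (cases "v < k")
      case True
      then have "map (\<lambda>v. src d (X v)) [0..<k] ! v = src d (X v)" by simp
      then show ?thesis using True unfolding h_def src_def by simp
    next
      case False
      then have "v - k < l" using \<open>v < k + l\<close> by simp
      then have "map (\<lambda>w. src d (Y w)) [0..<l] ! (v - k) = src d (Y (v - k))" by simp
      then show ?thesis using False unfolding h_def src_def by simp
    qed
  qed
  ultimately show ?thesis by (simp only:)
qed

lemma inj_xy:
  fixes k l :: nat and X :: "nat \<Rightarrow> nat + 'm"
  assumes X: "\<forall>v<k. isl (X v) \<longrightarrow> X v = Inl (B + v) \<and> B + v < N" and Y: "\<forall>w<l. Y w = Inl (N + w)"
  shows "inj_on (\<lambda>v. if v < k then X v else Y (v - k)) {v. v < k + l \<and> isl (if v < k then X v else Y (v - k))}"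
proof (rule inj_onI)
  fix x y
  assume x: "x \<in> {v. v < k + l \<and> isl (if v < k then X v else Y (v - k))}"
    and y: "y \<in> {v. v < k + l \<and> isl (if v < k then X v else Y (v - k))}"
    and xy: "(if x < k then X x else Y (x - k)) = (if y < k then X y else Y (y - k))"
  have cx: "(if x < k then X x else Y (x - k)) = (if x < k then Inl (B + x) else Inl (N + (x - k)))"
    using x X Y by (cases "x < k") auto
  have cy: "(if y < k then X y else Y (y - k)) = (if y < k then Inl (B + y) else Inl (N + (y - k)))"
    using y X Y by (cases "y < k") auto
  have bx: "x < k \<Longrightarrow> B + x < N" using x X by auto
  have by': "y < k \<Longrightarrow> B + y < N" using y X by auto
  have "(if x < k then Inl (B + x) else Inl (N + (x - k))) = (if y < k then (Inl (B + y) :: nat + 'm) else Inl (N + (y - k)))"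
    using xy cx cy by simp
  then show "x = y" using bx by' by (cases "x < k"; cases "y < k") auto
qed

lemma IP_from_Sh:
  fixes M :: "('f, 'r, 'm) struc"
  assumes mon: "monster fa ra M" and wf: "wf_fm fa ra \<phi>" and fv: "fv \<phi> \<subseteq> {..<k+l}"
    and all: "\<forall>n. Sh M k l \<phi> D n"
  shows "\<not> NIP M k l \<phi>"
proof -
  define A where "A = range D"
  have cA: "countable A" unfolding A_def by simp
  have c: "D 0 \<in> A" unfolding A_def by simp
  have "\<forall>S. \<exists>b. length b = l \<and> (\<forall>i. holds M k \<phi> (xsq k D i) b = (i \<in> S))"
  proof
    fix S :: "nat set"
    define g where "g = (\<lambda>i (d :: nat \<Rightarrow> 'm). holds M k \<phi> (xsq k D i) (map d [0..<l]) = (i \<in> S))"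
    define PP where "PP = g ` UNIV"
    have 1: "\<forall>P\<in>PP. defb fa ra M {..<l} A P"
    proof
      fix P assume "P \<in> PP"
      then obtain i where P: "P = g i" unfolding PP_def by blast
      have h: "defb fa ra M {..<l} A (\<lambda>d. holds M k \<phi> (map (\<lambda>v. src d (Inr (D (k*i+v)))) [0..<k])
          (map (\<lambda>w. src d (Inl (0 + w))) [0..<l]))"
      proof (rule defb_holds[OF wf fv c])
        show "\<forall>v<k. case Inr (D (k * i + v)) of Inl p \<Rightarrow> p \<in> {..<l} | Inr c \<Rightarrow> c \<in> A"
          unfolding A_def by simp
        show "\<forall>w<l. case Inl (0 + w) of Inl p \<Rightarrow> p \<in> {..<l} | Inr c \<Rightarrow> c \<in> A" by simp
        show "inj_on (\<lambda>v. if v < k then Inr (D (k * i + v)) else Inl (0 + (v - k)))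
            {v. v < k + l \<and> isl (if v < k then Inr (D (k * i + v)) else (Inl (0 + (v - k)) :: nat + 'm))}"
          by (rule inj_xy[where B=0 and N=0]) auto
      qed simp
      have eq: "(\<lambda>d. holds M k \<phi> (map (\<lambda>v. src d (Inr (D (k*i+v)))) [0..<k])
          (map (\<lambda>w. src d (Inl (0 + w))) [0..<l])) = (\<lambda>d. holds M k \<phi> (xsq k D i) (map d [0..<l]))"
        by (simp add: src_def xsq_def)
      have h2: "defb fa ra M {..<l} A (\<lambda>d. holds M k \<phi> (xsq k D i) (map d [0..<l]))"
        using h unfolding eq .
      show "defb fa ra M {..<l} A P"
      proof (cases "i \<in> S")
        case True
        then show ?thesis using h2 unfolding P g_def by simp
      next
        case False
        then show ?thesis using defb_neg[OF h2] unfolding P g_def by simp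
      qed
    qed
    have 2: "\<forall>F\<subseteq>PP. finite F \<longrightarrow> (\<exists>d. \<forall>P\<in>F. P d)"
    proof (intro allI impI)
      fix F assume F: "F \<subseteq> PP" "finite F"
      obtain I where I: "finite I" "F = g ` I"
        using finite_subset_image[OF F(2) F(1)[unfolded PP_def]] by blast
      obtain n where n: "\<forall>i\<in>I. i < n" using finite_nat_bounded[OF I(1)] by auto
      obtain b where b: "length b = l" "\<forall>i<n. holds M k \<phi> (xsq k D i) b = (i \<in> S \<inter> {..<n})"
        using all[rule_format, of n] unfolding Sh_def by (meson inf_le2)
      have mb: "map (\<lambda>w. b ! w) [0..<l] = b" using b(1) map_nth[of b] by simp
      have "\<forall>P\<in>F. P (\<lambda>w. b ! w)"
      proof
        fix P assume "P \<in> F"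
        then obtain i where "i \<in> I" "P = g i" using I(2) by blast
        then show "P (\<lambda>w. b ! w)" using b(2) n mb unfolding g_def by auto
      qed
      then show "\<exists>d. \<forall>P\<in>F. P d" by blast
    qed
    have "\<exists>d. \<forall>P\<in>PP. P d" by (rule realize[OF mon cA c finite_lessThan 1 2])
    then obtain d where d: "\<forall>P\<in>PP. P d" by blast
    have "\<forall>i. holds M k \<phi> (xsq k D i) (map d [0..<l]) = (i \<in> S)"
    proof
      fix i have "g i \<in> PP" unfolding PP_def by simp
      then have "g i d" using d by blast
      then show "holds M k \<phi> (xsq k D i) (map d [0..<l]) = (i \<in> S)" unfolding g_def .
    qed
    then show "\<exists>b. length b = l \<and> (\<forall>i. holds M k \<phi> (xsq k D i) b = (i \<in> S))"
      by (intro exI[of _ "map d [0..<l]"]) simp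
  qed
  then have "\<exists>a :: nat \<Rightarrow> 'm list. (\<forall>i. length (a i) = k) \<and>
          (\<forall>S :: nat set. \<exists>b. length b = l \<and> (\<forall>i. holds M k \<phi> (a i) b \<longleftrightarrow> i \<in> S))"
    by (intro exI[of _ "xsq k D"]) simp
  then show ?thesis unfolding NIP_def by blast
qed

lemma defb_Q:
  fixes M :: "('f, 'r, 'm) struc" and G :: "nat \<Rightarrow> 'm"
  assumes wf: "wf_fm fa ra \<phi>" and fv: "fv \<phi> \<subseteq> {..<k+l}"
    and c0: "c0 \<in> A" and GA: "G ` {..<k*t} \<subseteq> A" and tn: "Suc t \<le> n"
  shows "defb fa ra M {k*t..<k*t+k} A
    (\<lambda>d. \<exists>d''. Sh M k l \<phi> (\<lambda>p. if p < k * Suc t then (if p < k*t then G p else d p) else d'' p) n)"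
proof -
  define VB where "VB = {k*t..<k*n+l}"
  define Wy where "Wy = {k*n..<k*n+l}"
  define Wx where "Wx = {k*t+k..<k*n}"
  define E where "E = (\<lambda>(d :: nat \<Rightarrow> 'm) p. if p < k*t then G p else d p)"
  define R where "R = (\<lambda>S d. \<forall>i\<in>{..<n}. holds M k \<phi> (xsq k (E d) i) (map (\<lambda>w. d (k*n+w)) [0..<l]) = (i \<in> S))"
  have kt_kn: "k * t \<le> k * n" using tn by (intro mult_le_mono2) simp
  have ktk: "k * t + k \<le> k * n" using tn mult_le_mono2[of "Suc t" n k] by simp
  have tle: "t \<le> n" using tn by simp
  have finVB: "finite VB" unfolding VB_def by simp
  have atom: "defb fa ra M VB A (\<lambda>d. holds M k \<phi> (xsq k (E d) i) (map (\<lambda>w. d (k*n+w)) [0..<l]))"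
    if i: "i < n" for i
  proof -
    define X where "X = (\<lambda>v. if k*i+v < k*t then Inr (G (k*i+v)) else (Inl (k*i+v) :: nat + 'm))"
    define Y where "Y = (\<lambda>w. (Inl (k*n+w) :: nat + 'm))"
    have h: "defb fa ra M VB A (\<lambda>d. holds M k \<phi> (map (\<lambda>v. src d (X v)) [0..<k]) (map (\<lambda>w. src d (Y w)) [0..<l]))"
    proof (rule defb_holds[OF wf fv c0 finVB])
      show "\<forall>v<k. case X v of Inl p \<Rightarrow> p \<in> VB | Inr c \<Rightarrow> c \<in> A"
      proof (intro allI impI)
        fix v assume v: "v < k"
        show "case X v of Inl p \<Rightarrow> p \<in> VB | Inr c \<Rightarrow> c \<in> A"
        proof (cases "k*i+v < k*t")
          case True
          then have "G (k*i+v) \<in> A" using GA by auto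
          then show ?thesis using True unfolding X_def by simp
        next
          case False
          have "k*i+v < k*n" using lt_block[OF i v] .
          then show ?thesis using False unfolding X_def VB_def by simp
        qed
      qed
      show "\<forall>w<l. case Y w of Inl p \<Rightarrow> p \<in> VB | Inr c \<Rightarrow> c \<in> A"
      proof (intro allI impI)
        fix w assume "w < l"
        moreover have "k*t \<le> k*n + w" using kt_kn by linarith
        ultimately show "case Y w of Inl p \<Rightarrow> p \<in> VB | Inr c \<Rightarrow> c \<in> A" unfolding Y_def VB_def by simp
      qed
      show "inj_on (\<lambda>v. if v < k then X v else Y (v - k)) {v. v < k + l \<and> isl (if v < k then X v else Y (v - k))}"
      proof (rule inj_xy[where B="k*i" and N="k*n"])
        show "\<forall>v<k. isl (X v) \<longrightarrow> X v = Inl (k * i + v) \<and> k * i + v < k * n"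
          using lt_block[OF i] unfolding X_def by auto
        show "\<forall>w<l. Y w = Inl (k * n + w)" unfolding Y_def by simp
      qed
    qed
    have e1: "map (\<lambda>v. src d (X v)) [0..<k] = xsq k (E d) i" for d
      unfolding xsq_def
    proof (rule map_cong[OF refl])
      fix v show "src d (X v) = E d (k * i + v)"
        unfolding X_def E_def src_def by (cases "k*i+v < k*t") simp_all
    qed
    have e2: "map (\<lambda>w. src d (Y w)) [0..<l] = map (\<lambda>w. d (k*n+w)) [0..<l]" for d
      unfolding Y_def src_def by simp
    show ?thesis using h unfolding e1 e2 .
  qed
  have defR: "defb fa ra M VB A (R S)" for S
  proof -
    have "defb fa ra M VB A (\<lambda>d. \<forall>i\<in>{..<n}. (\<lambda>i d. holds M k \<phi> (xsq k (E d) i) (map (\<lambda>w. d (k*n+w)) [0..<l]) = (i \<in> S)) i d)"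
    proof (rule defb_conj_fin[OF finVB c0])
      show "\<forall>i\<in>{..<n}. defb fa ra M VB A (\<lambda>d. holds M k \<phi> (xsq k (E d) i) (map (\<lambda>w. d (k*n+w)) [0..<l]) = (i \<in> S))"
      proof
        fix i assume "i \<in> {..<n}"
        then have a: "defb fa ra M VB A (\<lambda>d. holds M k \<phi> (xsq k (E d) i) (map (\<lambda>w. d (k*n+w)) [0..<l]))"
          using atom by simp
        show "defb fa ra M VB A (\<lambda>d. holds M k \<phi> (xsq k (E d) i) (map (\<lambda>w. d (k*n+w)) [0..<l]) = (i \<in> S))"
        proof (cases "i \<in> S")
          case True then show ?thesis using a by simp
        next
          case False then show ?thesis using defb_neg[OF a] by simp
        qed
      qed
    qed simp
    then show ?thesis unfolding R_def by simp
  qed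
  have d1: "defb fa ra M (VB - Wy) A (\<lambda>d. \<exists>d'. R S (\<lambda>v. if v \<in> Wy then d' v else d v))" for S
    by (rule defb_exs[OF _ _ defR]) (auto simp: Wy_def VB_def kt_kn tle)
  have d2: "defb fa ra M (VB - Wy) A (\<lambda>d. \<forall>S\<in>Pow {..<n}. (\<lambda>S d. \<exists>d'. R S (\<lambda>v. if v \<in> Wy then d' v else d v)) S d)"
    by (rule defb_conj_fin[OF _ c0]) (use d1 finVB in auto)
  have d3: "defb fa ra M (VB - Wy - Wx) A (\<lambda>d. \<exists>d''. (\<lambda>d. \<forall>S\<in>Pow {..<n}. \<exists>d'. R S (\<lambda>v. if v \<in> Wy then d' v else d v))
       (\<lambda>v. if v \<in> Wx then d'' v else d v))"
    by (rule defb_exs[OF _ _ d2[simplified]]) (auto simp: Wy_def VB_def Wx_def kt_kn tle)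
  have VW: "VB - Wy - Wx = {k*t..<k*t+k}" unfolding VB_def Wy_def Wx_def using ktk by auto
  define F where "F = (\<lambda>(d :: nat \<Rightarrow> 'm) d'' p. if p < k * Suc t then (if p < k*t then G p else d p) else d'' p)"
  have key: "R S (\<lambda>v. if v \<in> Wy then d' v else (if v \<in> Wx then d'' v else d v)) =
     (\<forall>i<n. holds M k \<phi> (xsq k (F d d'') i) (map (\<lambda>w. d' (k*n+w)) [0..<l]) = (i \<in> S))" for S d d' d''
  proof -
    let ?M = "\<lambda>v. if v \<in> Wy then d' v else (if v \<in> Wx then d'' v else d v)"
    have m: "map (\<lambda>w. ?M (k*n+w)) [0..<l] = map (\<lambda>w. d' (k*n+w)) [0..<l]"
      unfolding Wy_def by simp
    have x: "xsq k (E ?M) i = xsq k (F d d'') i" if "i < n" for i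
    proof (rule xsq_cong[OF _ that], intro allI impI)
      fix p assume "p < k * n"
      then show "E ?M p = F d d'' p" unfolding E_def F_def Wy_def Wx_def by auto
    qed
    show ?thesis unfolding R_def m by (simp add: x Ball_def)
  qed
  have eqv: "(\<exists>d''. \<forall>S\<in>Pow {..<n}. \<exists>d'. R S (\<lambda>v. if v \<in> Wy then d' v else (if v \<in> Wx then d'' v else d v)))
     = (\<exists>d''. Sh M k l \<phi> (F d d'') n)" for d
  proof -
    have "(\<forall>S\<in>Pow {..<n}. \<exists>d'. R S (\<lambda>v. if v \<in> Wy then d' v else (if v \<in> Wx then d'' v else d v)))
       = Sh M k l \<phi> (F d d'') n" for d''
      unfolding key Sh_def ex_list[where N="k*n"] Ball_def Pow_iff by (rule refl)
    then show ?thesis by simp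
  qed
  show ?thesis using d3 unfolding VW eqv F_def by simp
qed

lemma Sh_seq:
  fixes M :: "('f, 'r, 'm) struc"
  assumes mon: "monster fa ra M" and wf: "wf_fm fa ra \<phi>" and fv: "fv \<phi> \<subseteq> {..<k+l}"
    and big: "\<forall>n. \<exists>D. Sh M k l \<phi> D n"
  shows "\<exists>D. \<forall>n. Sh M k l \<phi> D n"
proof -
  define Inv where "Inv = (\<lambda>t (G :: nat \<Rightarrow> 'm). \<forall>n\<ge>t. \<exists>d'. Sh M k l \<phi> (\<lambda>v. if v < k*t then G v else d' v) n)"
  have step: "\<exists>d. Inv (Suc t) (\<lambda>v. if v < k*t then G v else d v)" if inv: "Inv t G" for t G
  proof -
    define A where "A = insert undefined (G ` {..<k*t})"
    define Q where "Q = (\<lambda>n d. \<exists>d''. Sh M k l \<phi> (\<lambda>p. if p < k * Suc t then (if p < k*t then G p else d p) else d'' p) n)"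
    define PP where "PP = Q ` {Suc t..}"
    have cA: "countable A" unfolding A_def by (simp add: countable_finite)
    have c0: "undefined \<in> A" unfolding A_def by simp
    have GA: "G ` {..<k*t} \<subseteq> A" unfolding A_def by auto
    have 1: "\<forall>P\<in>PP. defb fa ra M {k*t..<k*t+k} A P"
    proof
      fix P assume "P \<in> PP"
      then obtain n where n: "Suc t \<le> n" "P = Q n" unfolding PP_def by auto
      show "defb fa ra M {k*t..<k*t+k} A P" unfolding n(2) Q_def by (rule defb_Q[OF wf fv c0 GA n(1)])
    qed
    have 2: "\<forall>F\<subseteq>PP. finite F \<longrightarrow> (\<exists>d. \<forall>P\<in>F. P d)"
    proof (intro allI impI)
      fix F assume F: "F \<subseteq> PP" "finite F"
      obtain N' where N': "N' \<subseteq> {Suc t..}" "finite N'" "F = Q ` N'"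
        using finite_subset_image[OF F(2) F(1)[unfolded PP_def]] by blast
      define m where "m = Max (insert (Suc t) N')"
      have mge: "n \<le> m" if "n \<in> N'" for n unfolding m_def using N'(2) that by simp
      have "Suc t \<le> m" unfolding m_def using Max_ge[of "insert (Suc t) N'" "Suc t"] N'(2) by simp
      then have "m \<ge> t" by simp
      then obtain d' where d': "Sh M k l \<phi> (\<lambda>v. if v < k*t then G v else d' v) m"
        using inv unfolding Inv_def by blast
      have "\<forall>P\<in>F. P d'"
      proof
        fix P assume "P \<in> F"
        then obtain n where n: "n \<in> N'" "P = Q n" using N'(3) by blast
        have eq: "(\<lambda>p. if p < k * Suc t then (if p < k*t then G p else d' p) else d' p) =
            (\<lambda>v. if v < k*t then G v else d' v)" by auto
        have "Sh M k l \<phi> (\<lambda>v. if v < k*t then G v else d' v) n" using Sh_mono[OF d' mge[OF n(1)]] .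
        then show "P d'" unfolding n(2) Q_def eq[symmetric] by blast
      qed
      then show "\<exists>d. \<forall>P\<in>F. P d" by blast
    qed
    have "\<exists>d. \<forall>P\<in>PP. P d" by (rule realize[OF mon cA c0 _ 1 2]) simp
    then obtain d where d: "\<forall>P\<in>PP. P d" by blast
    have "Inv (Suc t) (\<lambda>v. if v < k*t then G v else d v)"
      unfolding Inv_def
    proof (intro allI impI)
      fix n assume "Suc t \<le> n"
      then have "Q n \<in> PP" unfolding PP_def by simp
      then have "Q n d" using d by blast
      then show "\<exists>d'. Sh M k l \<phi> (\<lambda>v. if v < k * Suc t then (if v < k*t then G v else d v) else d' v) n"
        unfolding Q_def .
    qed
    then show ?thesis by blast
  qed
  define SD where "SD = (\<lambda>t G. SOME d. Inv (Suc t) (\<lambda>v. if v < k*t then G v else d v))"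
  define Gs where "Gs = rec_nat (undefined :: nat \<Rightarrow> 'm) (\<lambda>t G v. if v < k*t then G v else SD t G v)"
  have GsS: "Gs (Suc t) = (\<lambda>v. if v < k*t then Gs t v else SD t (Gs t) v)" for t
    unfolding Gs_def by simp
  have invS: "Inv t (Gs t)" for t
  proof (induction t)
    case 0
    show ?case unfolding Inv_def
    proof (intro allI impI)
      fix n obtain D where "Sh M k l \<phi> D n" using big by blast
      then show "\<exists>d'. Sh M k l \<phi> (\<lambda>v. if v < k*0 then Gs 0 v else d' v) n" by (intro exI[of _ D]) simp
    qed
  next
    case (Suc t)
    have "Inv (Suc t) (\<lambda>v. if v < k*t then Gs t v else SD t (Gs t) v)"
      unfolding SD_def by (rule someI_ex[OF step[OF Suc.IH]])
    then show ?case unfolding GsS .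
  qed
  have stab: "Gs t' p = Gs t p" if "t \<le> t'" "p < k * t" for t t' p
    using that(1)
  proof (induction t' rule: dec_induct)
    case (step n)
    have "p < k * n" using that(2) step.hyps(1) mult_le_mono2[of t n k] by linarith
    then show ?case unfolding GsS using step.IH by simp
  qed simp
  define D where "D = (\<lambda>p. Gs (Suc p) p)"
  have DG: "D p = Gs n p" if "p < k * n" for p n
  proof (cases "Suc p \<le> n")
    case True
    have "k > 0" using that by (cases k) auto
    then have kp: "1 * p \<le> k * p" by (intro mult_le_mono1) simp
    have "k * Suc p = k + k * p" by simp
    then have "p < k * Suc p" using kp \<open>k > 0\<close> by linarith
    then show ?thesis unfolding D_def using stab[OF True] by simp
  next
    case False
    then show ?thesis unfolding D_def using stab[of n "Suc p" p] that by simp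
  qed
  have "Sh M k l \<phi> D n" for n
  proof -
    obtain d' where d': "Sh M k l \<phi> (\<lambda>v. if v < k*n then Gs n v else d' v) n"
      using invS[of n] unfolding Inv_def by blast
    have e: "Sh M k l \<phi> D n = Sh M k l \<phi> (\<lambda>v. if v < k*n then Gs n v else d' v) n"
      by (rule Sh_cong) (simp add: DG)
    show ?thesis using d' unfolding e .
  qed
  then show ?thesis by blast
qed

definition AC :: "(nat \<Rightarrow> bool) \<Rightarrow> nat \<Rightarrow> bool" where
  "AC g m \<longleftrightarrow> (\<exists>u. strict_mono u \<and> (\<forall>i<m. g (u i) \<noteq> g (u (Suc i))))"

lemma sl_image:
  assumes h: "strict_mono (h :: nat \<Rightarrow> nat)"
  shows "sorted_list_of_set (h ` {..<n}) = map h [0..<n]"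
proof (rule sorted_distinct_set_unique)
  show "sorted (sorted_list_of_set (h ` {..<n}))" by simp
  show "distinct (sorted_list_of_set (h ` {..<n}))" by simp
  show "sorted (map h [0..<n])"
    unfolding sorted_iff_nth_mono using strict_mono_less_eq[OF h] by simp
  show "distinct (map h [0..<n])" using strict_mono_imp_inj_on[OF h]
    by (simp add: distinct_map inj_on_subset)
  show "set (sorted_list_of_set (h ` {..<n})) = set (map h [0..<n])" by auto
qed

lemma homog_fam:
  fixes C :: "'c \<Rightarrow> nat set \<Rightarrow> bool" and Z :: "nat set"
  assumes "finite SS" "infinite Z"
  shows "\<exists>Y\<subseteq>Z. infinite Y \<and> (\<forall>S\<in>SS. (\<forall>X. X \<subseteq> Y \<and> finite X \<and> card X = n \<longrightarrow> C S X) \<or>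
      (\<forall>X. X \<subseteq> Y \<and> finite X \<and> card X = n \<longrightarrow> \<not> C S X))"
  using assms(1)
proof (induction SS rule: finite_induct)
  case empty then show ?case using assms(2) by blast
next
  case (insert S SS)
  then obtain Y1 where Y1: "Y1 \<subseteq> Z" "infinite Y1" "\<forall>S\<in>SS. (\<forall>X. X \<subseteq> Y1 \<and> finite X \<and> card X = n \<longrightarrow> C S X) \<or>
      (\<forall>X. X \<subseteq> Y1 \<and> finite X \<and> card X = n \<longrightarrow> \<not> C S X)" by blast
  define f where "f = (\<lambda>X. if C S X then 0 else (1::nat))"
  have "\<forall>X. X \<subseteq> Y1 \<and> finite X \<and> card X = n \<longrightarrow> f X < 2" unfolding f_def by simp
  then obtain Y t where Y: "Y \<subseteq> Y1" "infinite Y" "t < 2" "\<forall>X. X \<subseteq> Y \<and> finite X \<and> card X = n \<longrightarrow> f X = t"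
    using Ramsey[OF Y1(2), where r=n and s=2 and f=f] by blast
  have "(\<forall>X. X \<subseteq> Y \<and> finite X \<and> card X = n \<longrightarrow> C S X) \<or> (\<forall>X. X \<subseteq> Y \<and> finite X \<and> card X = n \<longrightarrow> \<not> C S X)"
  proof (cases "t = 0")
    case True then show ?thesis using Y(4) unfolding f_def by (metis one_neq_zero)
  next
    case False then show ?thesis using Y(4) unfolding f_def by auto
  qed
  moreover have "\<forall>S\<in>SS. (\<forall>X. X \<subseteq> Y \<and> finite X \<and> card X = n \<longrightarrow> C S X) \<or>
      (\<forall>X. X \<subseteq> Y \<and> finite X \<and> card X = n \<longrightarrow> \<not> C S X)"
    using Y1(3) Y(1) by (meson subset_trans)
  ultimately show ?case using Y(1,2) Y1(1) by (intro exI[of _ Y]) auto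
qed

lemma alt_G:
  assumes "\<forall>i<m. G i \<noteq> G (Suc i)"
  shows "i \<le> m \<Longrightarrow> G i = (G 0 = even i)"
proof (induction i)
  case (Suc i)
  then have "G i \<noteq> G (Suc i)" using assms by simp
  then show ?case using Suc by auto
qed simp

lemma xsq_exists:
  assumes "\<forall>i. length (c i) = k"
  shows "\<exists>D. \<forall>i. xsq k D i = c i"
proof (cases "k = 0")
  case True
  then show ?thesis using assms unfolding xsq_def by simp
next
  case False
  define D where "D = (\<lambda>p. c (p div k) ! (p mod k))"
  have "xsq k D i = c i" for i
  proof (rule nth_equalityI)
    show "length (xsq k D i) = length (c i)" using assms by simp
    fix v assume "v < length (xsq k D i)"
    then have v: "v < k" by simp
    then have "(k * i + v) div k = i" "(k * i + v) mod k = v" using False by auto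
    then show "xsq k D i ! v = c i ! v" unfolding xsq_def D_def using v by simp
  qed
  then show ?thesis by blast
qed

lemma Big_from_H:
  fixes M :: "('f, 'r, 'm) struc" and a :: "nat \<Rightarrow> 'm list"
  assumes lens: "\<forall>i. length (a i) = k"
    and H: "\<forall>j. strict_mono j \<longrightarrow> (\<forall>m. \<exists>b. length b = l \<and> AC (\<lambda>i. holds M k \<phi> (a (j i)) b) m)"
  shows "\<exists>D. Sh M k l \<phi> D n"
proof -
  define Real where "Real = (\<lambda>S X. \<exists>b. length b = l \<and>
      (\<forall>i<n. holds M k \<phi> (a (sorted_list_of_set X ! i)) b = (i \<in> S)))"
  obtain Y where Y: "infinite Y" "\<forall>S\<in>Pow {..<n}. (\<forall>X. X \<subseteq> Y \<and> finite X \<and> card X = n \<longrightarrow> Real S X) \<or>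
      (\<forall>X. X \<subseteq> Y \<and> finite X \<and> card X = n \<longrightarrow> \<not> Real S X)"
    using homog_fam[of "Pow {..<n}" UNIV n Real] by auto
  define j where "j = enumerate Y"
  have j: "strict_mono j" "\<And>i. j i \<in> Y" unfolding j_def using Y(1)
    by (auto simp: strict_mono_enumerate enumerate_in_set)
  obtain b u where bu: "length b = l" "strict_mono u"
    "\<forall>i<2*n. holds M k \<phi> (a (j (u i))) b \<noteq> holds M k \<phi> (a (j (u (Suc i)))) b"
    using H j(1) unfolding AC_def by blast
  define G where "G = (\<lambda>i. holds M k \<phi> (a (j (u i))) b)"
  have alt: "G i = (G 0 = even i)" if "i \<le> 2*n" for i
    using alt_G[of "2*n" G] bu(3) that unfolding G_def by blast
  have X0sl: "sorted_list_of_set (j ` {..<n}) = map j [0..<n]" by (rule sl_image[OF j(1)])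
  have allreal: "Real S (j ` {..<n})" if S: "S \<subseteq> {..<n}" for S
  proof -
    define w where "w = (\<lambda>i. 2*i + (if i < n \<and> (i \<in> S) = G 0 then 0 else (1::nat)))"
    have w: "strict_mono w" unfolding strict_mono_def
    proof (intro allI impI)
      fix x y :: nat assume "x < y"
      then have "2*x + 1 < 2*y" by simp
      then show "w x < w y" unfolding w_def by simp
    qed
    define h where "h = (\<lambda>i. j (u (w i)))"
    have h: "strict_mono h" unfolding h_def strict_mono_def
      using j(1) bu(2) w by (simp add: strict_mono_less)
    have "Real S (h ` {..<n})"
      unfolding Real_def
    proof (intro exI[of _ b] conjI allI impI)
      show "length b = l" by (rule bu(1))
      fix i assume i: "i < n"
      have sl: "sorted_list_of_set (h ` {..<n}) ! i = h i" using sl_image[OF h] i by simp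
      have wle: "w i \<le> 2*n" unfolding w_def using i by simp
      have "holds M k \<phi> (a (h i)) b = G (w i)" unfolding h_def G_def by simp
      also have "\<dots> = (G 0 = even (w i))" by (rule alt[OF wle])
      also have "\<dots> = (i \<in> S)" unfolding w_def using i by auto
      finally show "holds M k \<phi> (a (sorted_list_of_set (h ` {..<n}) ! i)) b = (i \<in> S)" unfolding sl .
    qed
    moreover have "h ` {..<n} \<subseteq> Y" unfolding h_def using j(2) by auto
    moreover have "card (h ` {..<n}) = n"
      using card_image[OF strict_mono_imp_inj_on[OF h], of "{..<n}"] by simp
    ultimately have "\<forall>X. X \<subseteq> Y \<and> finite X \<and> card X = n \<longrightarrow> Real S X" using Y(2) S by blast
    moreover have "j ` {..<n} \<subseteq> Y" using j(2) by auto
    moreover have "card (j ` {..<n}) = n"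
      using card_image[OF strict_mono_imp_inj_on[OF j(1)], of "{..<n}"] by simp
    ultimately show ?thesis by blast
  qed
  obtain D where D: "\<forall>i. xsq k D i = a (j i)" using xsq_exists[of "\<lambda>i. a (j i)" k] lens by blast
  have "Sh M k l \<phi> D n" unfolding Sh_def
  proof (intro allI impI)
    fix S assume "S \<subseteq> {..<n}"
    then obtain b' where b': "length b' = l" "\<forall>i<n. holds M k \<phi> (a (sorted_list_of_set (j ` {..<n}) ! i)) b' = (i \<in> S)"
      using allreal unfolding Real_def by blast
    show "\<exists>b. length b = l \<and> (\<forall>i<n. holds M k \<phi> (xsq k D i) b = (i \<in> S))"
      using b' D X0sl by (intro exI[of _ b']) simp
  qed
  then show ?thesis by blast
qed

lemma notNIP_from_H:
  fixes M :: "('f, 'r, 'm) struc" and a :: "nat \<Rightarrow> 'm list"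
  assumes mon: "monster fa ra M" and wf: "wf_fm fa ra \<phi>" and fv: "fv \<phi> \<subseteq> {..<k+l}"
    and lens: "\<forall>i. length (a i) = k"
    and H: "\<forall>j. strict_mono j \<longrightarrow> (\<forall>m. \<exists>b. length b = l \<and> AC (\<lambda>i. holds M k \<phi> (a (j i)) b) m)"
  shows "\<not> NIP M k l \<phi>"
proof -
  have "\<forall>n. \<exists>D. Sh M k l \<phi> D n" using Big_from_H[OF lens H] by blast
  then obtain D where "\<forall>n. Sh M k l \<phi> D n" using Sh_seq[OF mon wf fv] by blast
  then show ?thesis by (rule IP_from_Sh[OF mon wf fv])
qed

lemma AC_from_F:
  fixes g :: "nat \<Rightarrow> bool"
  shows "\<forall>n0 F. F \<subseteq> {p. g p \<noteq> g (Suc p)} \<inter> {n0..} \<longrightarrow> finite F \<longrightarrow> card F = m \<longrightarrow>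
    (\<exists>u. strict_mono u \<and> u 0 = n0 \<and> (\<forall>i<m. g (u i) \<noteq> g (u (Suc i))))"
proof (induction m)
  case 0
  show ?case
  proof (intro allI impI)
    fix n0 :: nat
    show "\<exists>u. strict_mono u \<and> u 0 = n0 \<and> (\<forall>i<0. g (u i) \<noteq> g (u (Suc i)))"
      by (intro exI[of _ "\<lambda>i. n0 + i"]) (simp add: strict_mono_def)
  qed
next
  case (Suc m)
  show ?case
  proof (intro allI impI)
    fix n0 F assume F: "F \<subseteq> {p. g p \<noteq> g (Suc p)} \<inter> {n0..}" "finite F" "card F = Suc m"
    then have Fne: "F \<noteq> {}" by auto
    define c where "c = Min F"
    have cF: "c \<in> F" unfolding c_def using Min_in[OF F(2) Fne] .
    have cmin: "\<And>x. x \<in> F \<Longrightarrow> c \<le> x" unfolding c_def using Min_le[OF F(2)] by blast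
    have gc: "g c \<noteq> g (Suc c)" and n0c: "n0 \<le> c" using cF F(1) by auto
    define F' where "F' = F - {c}"
    have F'1: "F' \<subseteq> {p. g p \<noteq> g (Suc p)} \<inter> {Suc c..}"
    proof
      fix x assume x: "x \<in> F'"
      then have xF: "x \<in> F" "x \<noteq> c" unfolding F'_def by auto
      then have "c < x" using cmin[of x] by simp
      then show "x \<in> {p. g p \<noteq> g (Suc p)} \<inter> {Suc c..}" using xF(1) F(1) by auto
    qed
    have F': "F' \<subseteq> {p. g p \<noteq> g (Suc p)} \<inter> {Suc c..}" "finite F'" "card F' = m"
      using F'1 F(2,3) cF unfolding F'_def by auto
    obtain u' where u': "strict_mono u'" "u' 0 = Suc c" "\<forall>i<m. g (u' i) \<noteq> g (u' (Suc i))"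
      using Suc.IH F' by blast
    show "\<exists>u. strict_mono u \<and> u 0 = n0 \<and> (\<forall>i<Suc m. g (u i) \<noteq> g (u (Suc i)))"
    proof (cases "g n0 = g (Suc c)")
      case False
      define u where "u = (\<lambda>i. case i of 0 \<Rightarrow> n0 | Suc i' \<Rightarrow> u' i')"
      have "strict_mono u" unfolding strict_mono_Suc_iff
      proof
        fix i show "u i < u (Suc i)"
        proof (cases i)
          case 0 then show ?thesis unfolding u_def using u'(2) n0c by simp
        next
          case (Suc i') then show ?thesis unfolding u_def using u'(1) by (simp add: strict_mono_Suc_iff)
        qed
      qed
      moreover have "\<forall>i<Suc m. g (u i) \<noteq> g (u (Suc i))"
      proof (intro allI impI)
        fix i assume i: "i < Suc m"
        show "g (u i) \<noteq> g (u (Suc i))"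
        proof (cases i)
          case 0 then show ?thesis unfolding u_def using u'(2) False by simp
        next
          case (Suc i') then show ?thesis unfolding u_def using u'(3) i by simp
        qed
      qed
      ultimately show ?thesis unfolding u_def by (intro exI[of _ u]) (simp add: u_def)
    next
      case True
      then have gn0c: "g n0 \<noteq> g c" using gc by simp
      then have "n0 \<noteq> c" by auto
      then have n0lt: "n0 < c" using n0c by simp
      define u where "u = (\<lambda>i. case i of 0 \<Rightarrow> n0 | Suc 0 \<Rightarrow> c | Suc (Suc i') \<Rightarrow> u' i')"
      have "strict_mono u" unfolding strict_mono_Suc_iff
      proof
        fix i show "u i < u (Suc i)"
        proof (cases i)
          case 0 then show ?thesis unfolding u_def using n0lt by simp
        next
          case (Suc i')
          show ?thesis
          proof (cases i')
            case 0 then show ?thesis unfolding u_def using u'(2) Suc by simp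
          next
            case (Suc i'') then show ?thesis unfolding u_def using u'(1) \<open>i = Suc i'\<close>
              by (simp add: strict_mono_Suc_iff)
          qed
        qed
      qed
      moreover have "\<forall>i<Suc m. g (u i) \<noteq> g (u (Suc i))"
      proof (intro allI impI)
        fix i assume i: "i < Suc m"
        show "g (u i) \<noteq> g (u (Suc i))"
        proof (cases i)
          case 0 then show ?thesis unfolding u_def using gn0c by simp
        next
          case (Suc i')
          show ?thesis
          proof (cases i')
            case 0 then show ?thesis unfolding u_def using u'(2) Suc gc by simp
          next
            case (Suc i'') then show ?thesis unfolding u_def using u'(3) \<open>i = Suc i'\<close> i by simp
          qed
        qed
      qed
      ultimately show ?thesis by (intro exI[of _ u]) (simp add: u_def)
    qed
  qed
qed

lemma noAC_fin:
  fixes g :: "nat \<Rightarrow> bool"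
  assumes "\<not> AC g m"
  shows "finite {p. g p \<noteq> g (Suc p)} \<and> card {p. g p \<noteq> g (Suc p)} < m"
proof -
  have no: "\<not> (\<exists>F. F \<subseteq> {p. g p \<noteq> g (Suc p)} \<and> finite F \<and> card F = m)"
  proof
    assume "\<exists>F. F \<subseteq> {p. g p \<noteq> g (Suc p)} \<and> finite F \<and> card F = m"
    then obtain F where F: "F \<subseteq> {p. g p \<noteq> g (Suc p)}" "finite F" "card F = m" by blast
    then have "F \<subseteq> {p. g p \<noteq> g (Suc p)} \<inter> {0..}" by auto
    then obtain u where "strict_mono u" "\<forall>i<m. g (u i) \<noteq> g (u (Suc i))"
      using AC_from_F[of g m] F(2,3) by blast
    then show False using assms unfolding AC_def by blast
  qed
  have fin: "finite {p. g p \<noteq> g (Suc p)}"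
  proof (rule ccontr)
    assume "infinite {p. g p \<noteq> g (Suc p)}"
    then obtain F where "F \<subseteq> {p. g p \<noteq> g (Suc p)}" "finite F" "card F = m"
      using infinite_arbitrarily_large by blast
    then show False using no by blast
  qed
  have "card {p. g p \<noteq> g (Suc p)} < m"
  proof (rule ccontr)
    assume "\<not> card {p. g p \<noteq> g (Suc p)} < m"
    then obtain F where "F \<subseteq> {p. g p \<noteq> g (Suc p)}" "card F = m"
      using obtain_subset_with_card_n[of m "{p. g p \<noteq> g (Suc p)}"] by auto
    then show False using no fin finite_subset by blast
  qed
  then show ?thesis using fin by blast
qed

lemma ev_const:
  fixes g :: "nat \<Rightarrow> bool"
  assumes fin: "finite {p. g p \<noteq> g (Suc p)}"
  shows "\<exists>n. \<forall>i\<ge>n. g i = g n"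
proof -
  obtain B where B: "\<forall>p\<in>{p. g p \<noteq> g (Suc p)}. p < B" using finite_nat_bounded[OF fin] by auto
  have "g i = g B" if "B \<le> i" for i
    using that
  proof (induction i rule: dec_induct)
    case (step n)
    then have "g n = g (Suc n)" using B by force
    then show ?case using step.IH by simp
  qed simp
  then show ?thesis by blast
qed

lemma sum_bound:
  fixes g :: "nat \<Rightarrow> bool"
  assumes fin: "finite {p. g p \<noteq> g (Suc p)}" and cm: "card {p. g p \<noteq> g (Suc p)} < m"
  shows "let t = (\<lambda>i. \<bar>(of_bool (g i) :: real) - of_bool (g (Suc i))\<bar>)
                in summable (\<lambda>i. t (Suc i)) \<and> (\<Sum>i. t (Suc i)) \<le> real m"
proof -
  define C where "C = {p. g p \<noteq> g (Suc p)}"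
  define N where "N = Suc -` C"
  have finN: "finite N" unfolding N_def C_def using fin by (intro finite_vimageI) auto
  have t: "\<bar>(of_bool (g (Suc i)) :: real) - of_bool (g (Suc (Suc i)))\<bar> = (if i \<in> N then 1 else 0)" for i
    unfolding N_def C_def by (cases "g (Suc i)"; cases "g (Suc (Suc i))") auto
  have z: "\<And>i. i \<notin> N \<Longrightarrow> \<bar>(of_bool (g (Suc i)) :: real) - of_bool (g (Suc (Suc i)))\<bar> = 0" using t by simp
  have s: "summable (\<lambda>i. \<bar>(of_bool (g (Suc i)) :: real) - of_bool (g (Suc (Suc i)))\<bar>)"
    by (rule summable_finite[OF finN z])
  have "(\<Sum>i. \<bar>(of_bool (g (Suc i)) :: real) - of_bool (g (Suc (Suc i)))\<bar>) =
      (\<Sum>i\<in>N. \<bar>(of_bool (g (Suc i)) :: real) - of_bool (g (Suc (Suc i)))\<bar>)"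
    by (rule suminf_finite[OF finN z])
  also have "\<dots> = real (card N)" using t by simp
  also have "card N \<le> card C"
  proof -
    have "card N = card (Suc ` N)" by (simp add: card_image)
    also have "\<dots> \<le> card C" unfolding N_def using fin unfolding C_def by (intro card_mono) auto
    finally show ?thesis .
  qed
  then have "real (card N) \<le> real m" using cm unfolding C_def by simp
  finally show ?thesis using s unfolding Let_def by simp
qed

lemma openin_all_fin:
  assumes "finite T" "\<forall>p\<in>T. openin X {q \<in> topspace X. P p q}"
  shows "openin X {q \<in> topspace X. \<forall>p\<in>T. P p q}"
  using assms
proof (induction T rule: finite_induct)
  case empty then show ?case by simp
next
  case (insert p T)
  have "{q \<in> topspace X. \<forall>p'\<in>insert p T. P p' q} = {q \<in> topspace X. P p q} \<inter> {q \<in> topspace X. \<forall>p\<in>T. P p q}"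
    by auto
  then show ?case using insert by (simp add: openin_Int)
qed

lemma lsc_card:
  assumes op: "\<forall>p. openin X {q \<in> topspace X. P p q}" and fin: "\<forall>q\<in>topspace X. finite {p. P p q}"
  shows "lsc_on X (\<lambda>q. real (card {p. P p q}))"
  unfolding lsc_on_def
proof
  fix c :: real
  have eq: "{q \<in> topspace X. real (card {p. P p q}) > c} =
      \<Union> ((\<lambda>T. {q \<in> topspace X. \<forall>p\<in>T. P p q}) ` {T. finite T \<and> real (card T) > c})"
  proof
    show "{q \<in> topspace X. real (card {p. P p q}) > c} \<subseteq>
      \<Union> ((\<lambda>T. {q \<in> topspace X. \<forall>p\<in>T. P p q}) ` {T. finite T \<and> real (card T) > c})"
    proof
      fix q assume q: "q \<in> {q \<in> topspace X. real (card {p. P p q}) > c}"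
      then have "finite {p. P p q}" using fin by blast
      then show "q \<in> \<Union> ((\<lambda>T. {q \<in> topspace X. \<forall>p\<in>T. P p q}) ` {T. finite T \<and> real (card T) > c})"
        using q by blast
    qed
    show "\<Union> ((\<lambda>T. {q \<in> topspace X. \<forall>p\<in>T. P p q}) ` {T. finite T \<and> real (card T) > c}) \<subseteq>
      {q \<in> topspace X. real (card {p. P p q}) > c}"
    proof
      fix q assume "q \<in> \<Union> ((\<lambda>T. {q \<in> topspace X. \<forall>p\<in>T. P p q}) ` {T. finite T \<and> real (card T) > c})"
      then obtain T where T: "finite T" "real (card T) > c" "q \<in> topspace X" "\<forall>p\<in>T. P p q" by blast
      have "card T \<le> card {p. P p q}" using T(3,4) fin by (intro card_mono) auto
      then show "q \<in> {q \<in> topspace X. real (card {p. P p q}) > c}" using T by simp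
    qed
  qed
  show "openin X {q \<in> topspace X. real (card {p. P p q}) > c}"
    unfolding eq
  proof (rule openin_Union)
    fix S assume "S \<in> (\<lambda>T. {q \<in> topspace X. \<forall>p\<in>T. P p q}) ` {T. finite T \<and> real (card T) > c}"
    then obtain T where "finite T" "S = {q \<in> topspace X. \<forall>p\<in>T. P p q}" by blast
    then show "openin X S" using openin_all_fin op by blast
  qed
qed

lemma open_coord:
  assumes "x \<in> A"
  shows "openin (phi_type_space M k l \<phi> A) {q \<in> topspace (phi_type_space M k l \<phi> A). q x = v}"
proof -
  have "continuous_map (product_topology (\<lambda>_. discrete_topology UNIV) A) (discrete_topology UNIV) (\<lambda>q. q x)"
    using continuous_map_product_projection[OF assms, of "\<lambda>_. discrete_topology UNIV"] by simp
  then have c: "continuous_map (phi_type_space M k l \<phi> A) (discrete_topology UNIV) (\<lambda>q. q x)"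
    unfolding phi_type_space_def by (rule continuous_map_from_subtopology)
  have "openin (phi_type_space M k l \<phi> A) {q \<in> topspace (phi_type_space M k l \<phi> A). q x \<in> {v}}"
    by (rule openin_continuous_map_preimage[OF c]) simp
  then show ?thesis by simp
qed

lemma not_conv_alt: "\<not> ((\<lambda>i. (of_bool (even i) :: real)) \<longlonglongrightarrow> L)"
proof
  assume a: "(\<lambda>i. (of_bool (even i) :: real)) \<longlonglongrightarrow> L"
  have "(\<lambda>i. (of_bool (even (Suc i)) :: real)) \<longlonglongrightarrow> L" using a by (rule LIMSEQ_Suc)
  then have "(\<lambda>i. \<bar>(of_bool (even i) :: real) - of_bool (even (Suc i))\<bar>) \<longlonglongrightarrow> \<bar>L - L\<bar>"
    using a by (intro tendsto_rabs tendsto_diff)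
  moreover have "(\<lambda>i. \<bar>(of_bool (even i) :: real) - of_bool (even (Suc i))\<bar>) = (\<lambda>i. 1)" by auto
  ultimately have "(\<lambda>i. (1::real)) \<longlonglongrightarrow> 0" by simp
  then show False using LIMSEQ_unique[OF tendsto_const] by force
qed

lemma part4:
  fixes M :: "('f, 'r, 'm) struc" and a :: "nat \<Rightarrow> 'm list" and j :: "nat \<Rightarrow> nat"
  assumes noac: "\<forall>b. length b = l \<longrightarrow> \<not> AC (\<lambda>i. holds M k \<phi> (a (j i)) b) m"
  shows "\<exists>f. let X = phi_type_space M k l \<phi> (range (a \<circ> j))
             in (\<forall>q \<in> topspace X. (\<lambda>i. (of_bool (q (a (j i))) :: real)) \<longlonglongrightarrow> f q) \<and> DBSC X f"
proof -
  define A where "A = range (a \<circ> j)"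
  define X where "X = phi_type_space M k l \<phi> A"
  have aA: "a (j i) \<in> A" for i unfolding A_def by simp
  have tq: "q \<in> phi_types M k l \<phi> A" if "q \<in> topspace X" for q
    using that unfolding X_def phi_type_space_def by simp
  have noacq: "\<not> AC (\<lambda>i. q (a (j i))) m" if q: "q \<in> topspace X" for q
  proof
    assume "AC (\<lambda>i. q (a (j i))) m"
    then obtain u where u: "strict_mono u" "\<forall>i<m. q (a (j (u i))) \<noteq> q (a (j (u (Suc i))))"
      unfolding AC_def by blast
    define F where "F = (\<lambda>i. a (j (u i))) ` {..m}"
    have "F \<subseteq> A" "finite F" unfolding F_def using aA by auto
    then obtain b where b: "length b = l" "\<forall>x\<in>F. q x = holds M k \<phi> x b"
      using tq[OF q] unfolding phi_types_def by blast
    have "\<forall>i<m. holds M k \<phi> (a (j (u i))) b \<noteq> holds M k \<phi> (a (j (u (Suc i)))) b"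
    proof (intro allI impI)
      fix i assume i: "i < m"
      have "a (j (u i)) \<in> F" "a (j (u (Suc i))) \<in> F" unfolding F_def using i by auto
      then show "holds M k \<phi> (a (j (u i))) b \<noteq> holds M k \<phi> (a (j (u (Suc i)))) b"
        using b(2) u(2) i by metis
    qed
    then have "AC (\<lambda>i. holds M k \<phi> (a (j i)) b) m" unfolding AC_def using u(1) by blast
    then show False using noac b(1) by blast
  qed
  define gq where "gq = (\<lambda>q p. case p of 0 \<Rightarrow> False | Suc i \<Rightarrow> q (a (j i)))"
  define UP where "UP = (\<lambda>q. {p. \<not> gq q p \<and> gq q (Suc p)})"
  define DN where "DN = (\<lambda>q. {p. gq q p \<and> \<not> gq q (Suc p)})"
  have Cfin: "finite {p. gq q p \<noteq> gq q (Suc p)} \<and> card {p. gq q p \<noteq> gq q (Suc p)} \<le> m"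
    if q: "q \<in> topspace X" for q
  proof -
    define C where "C = {p. q (a (j p)) \<noteq> q (a (j (Suc p)))}"
    have C: "finite C" "card C < m" using noAC_fin[OF noacq[OF q]] unfolding C_def by auto
    have sub: "{p. gq q p \<noteq> gq q (Suc p)} \<subseteq> insert 0 (Suc ` C)"
    proof
      fix p assume "p \<in> {p. gq q p \<noteq> gq q (Suc p)}"
      then show "p \<in> insert 0 (Suc ` C)" unfolding gq_def C_def by (cases p) auto
    qed
    have "finite (insert 0 (Suc ` C))" using C(1) by simp
    moreover have "card (insert 0 (Suc ` C)) \<le> m"
    proof -
      have "card (insert 0 (Suc ` C)) \<le> Suc (card (Suc ` C))" by (rule card_insert_le_m1) simp_all
      also have "card (Suc ` C) = card C" by (simp add: card_image)
      finally show ?thesis using C(2) by simp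
    qed
    ultimately show ?thesis using sub card_mono finite_subset by (metis le_trans)
  qed
  have UDfin: "finite (UP q) \<and> card (UP q) \<le> m \<and> finite (DN q) \<and> card (DN q) \<le> m" if q: "q \<in> topspace X" for q
  proof -
    have "UP q \<subseteq> {p. gq q p \<noteq> gq q (Suc p)}" "DN q \<subseteq> {p. gq q p \<noteq> gq q (Suc p)}"
      unfolding UP_def DN_def by auto
    then show ?thesis using Cfin[OF q] card_mono finite_subset by (metis le_trans)
  qed
  define F1 where "F1 = (\<lambda>q. real (card (UP q)))"
  define F2 where "F2 = (\<lambda>q. real (card (DN q)))"
  define f where "f = (\<lambda>q. F1 q - F2 q)"
  have tele: "(of_bool (gq q n) :: real) = real (card (UP q \<inter> {..<n})) - real (card (DN q \<inter> {..<n}))"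
    if q: "q \<in> topspace X" for q n
  proof (induction n)
    case 0 then show ?case unfolding gq_def by simp
  next
    case (Suc n)
    have fU: "finite (UP q \<inter> {..<n})" and fD: "finite (DN q \<inter> {..<n})" by auto
    have U: "UP q \<inter> {..<Suc n} = (if n \<in> UP q then insert n (UP q \<inter> {..<n}) else UP q \<inter> {..<n})"
      by (auto simp: lessThan_Suc)
    have D: "DN q \<inter> {..<Suc n} = (if n \<in> DN q then insert n (DN q \<inter> {..<n}) else DN q \<inter> {..<n})"
      by (auto simp: lessThan_Suc)
    have cU: "card (UP q \<inter> {..<Suc n}) = (if n \<in> UP q then Suc (card (UP q \<inter> {..<n})) else card (UP q \<inter> {..<n}))"
      unfolding U using fU by simp
    have cD: "card (DN q \<inter> {..<Suc n}) = (if n \<in> DN q then Suc (card (DN q \<inter> {..<n})) else card (DN q \<inter> {..<n}))"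
      unfolding D using fD by simp
    show ?case using Suc.IH unfolding cU cD
      by (cases "gq q n"; cases "gq q (Suc n)") (simp_all add: UP_def DN_def)
  qed
  have conv: "(\<lambda>i. (of_bool (q (a (j i))) :: real)) \<longlonglongrightarrow> f q" if q: "q \<in> topspace X" for q
  proof -
    obtain B where B: "\<forall>p\<in>{p. gq q p \<noteq> gq q (Suc p)}. p < B"
      using finite_nat_bounded[of "{p. gq q p \<noteq> gq q (Suc p)}"] Cfin[OF q] by auto
    have "\<forall>i\<ge>B. (of_bool (q (a (j i))) :: real) = f q"
    proof (intro allI impI)
      fix i assume i: "B \<le> i"
      have "UP q \<inter> {..<Suc i} = UP q" "DN q \<inter> {..<Suc i} = DN q"
        using B i unfolding UP_def DN_def by force+
      then show "(of_bool (q (a (j i))) :: real) = f q"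
        using tele[OF q, of "Suc i"] unfolding f_def F1_def F2_def gq_def by simp
    qed
    then have "eventually (\<lambda>i. (of_bool (q (a (j i))) :: real) = f q) sequentially"
      unfolding eventually_sequentially by blast
    then show ?thesis by (rule tendsto_eventually)
  qed
  have opB: "openin X {q \<in> topspace X. gq q p = v}" for p v
  proof (cases p)
    case 0
    then show ?thesis unfolding gq_def by (cases v) simp_all
  next
    case (Suc i)
    then show ?thesis unfolding gq_def X_def using open_coord[OF aA[of i]] by simp
  qed
  have opUD: "openin X {q \<in> topspace X. (\<not> gq q p \<and> gq q (Suc p))}"
             "openin X {q \<in> topspace X. (gq q p \<and> \<not> gq q (Suc p))}" for p
  proof -
    have "{q \<in> topspace X. (\<not> gq q p \<and> gq q (Suc p))} = {q \<in> topspace X. gq q p = False} \<inter> {q \<in> topspace X. gq q (Suc p) = True}"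
      by auto
    then show "openin X {q \<in> topspace X. (\<not> gq q p \<and> gq q (Suc p))}" by (simp only:) (rule openin_Int[OF opB opB])
    have "{q \<in> topspace X. (gq q p \<and> \<not> gq q (Suc p))} = {q \<in> topspace X. gq q p = True} \<inter> {q \<in> topspace X. gq q (Suc p) = False}"
      by auto
    then show "openin X {q \<in> topspace X. (gq q p \<and> \<not> gq q (Suc p))}" by (simp only:) (rule openin_Int[OF opB opB])
  qed
  have lsc1: "lsc_on X F1" unfolding F1_def UP_def
    by (rule lsc_card) (use opUD(1) UDfin in \<open>auto simp: UP_def\<close>)
  have lsc2: "lsc_on X F2" unfolding F2_def DN_def
    by (rule lsc_card) (use opUD(2) UDfin in \<open>auto simp: DN_def\<close>)
  have bd1: "bounded_fun_on X F1" unfolding bounded_fun_on_def F1_def using UDfin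
    by (intro exI[of _ "real m"]) auto
  have bd2: "bounded_fun_on X F2" unfolding bounded_fun_on_def F2_def using UDfin
    by (intro exI[of _ "real m"]) auto
  have "DBSC X f" unfolding DBSC_def bsc_on_def f_def using lsc1 lsc2 bd1 bd2 by blast
  then show ?thesis using conv unfolding Let_def X_def A_def by blast
qed

theorem proposition2p13:
  fixes fa :: "'f \<Rightarrow> nat" and ra :: "'r \<Rightarrow> nat"
    and M :: "('f, 'r, 'm) struc" and \<phi> :: "('f, 'r) fm" and k l :: nat
  assumes "monster fa ra M"
    and "wf_fm fa ra \<phi>" and "fv \<phi> \<subseteq> {..<k + l}"
  shows
   "(NIP M k l \<phi> \<longleftrightarrow>
      (\<forall>a :: nat \<Rightarrow> 'm list. (\<forall>i. length (a i) = k) \<longrightarrow>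
         (\<exists>j :: nat \<Rightarrow> nat. strict_mono j \<and>
            (\<forall>b. length b = l \<longrightarrow>
               (\<exists>n. \<forall>i\<ge>n. holds M k \<phi> (a (j i)) b = holds M k \<phi> (a (j n)) b)))))
  \<and> (NIP M k l \<phi> \<longleftrightarrow>
      (\<forall>a :: nat \<Rightarrow> 'm list. (\<forall>i. length (a i) = k) \<longrightarrow>
         (\<exists>j (N :: nat). strict_mono j \<and>
            (\<forall>b. length b = l \<longrightarrow>
               (let t = (\<lambda>i. \<bar>(of_bool (holds M k \<phi> (a (j i)) b) :: real)
                              - of_bool (holds M k \<phi> (a (j (Suc i))) b)\<bar>)
                in summable (\<lambda>i. t (Suc i)) \<and> (\<Sum>i. t (Suc i)) \<le> real N)))))
  \<and> (NIP M k l \<phi> \<longleftrightarrow>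
      (\<forall>a :: nat \<Rightarrow> 'm list. (\<forall>i. length (a i) = k) \<longrightarrow>
         (\<exists>j f. strict_mono j \<and>
            (let X = phi_type_space M k l \<phi> (range (a \<circ> j))
             in (\<forall>q \<in> topspace X.
                   (\<lambda>i. (of_bool (q (a (j i))) :: real)) \<longlonglongrightarrow> f q)
                \<and> DBSC X f))))"
proof -
  note mon = assms(1) and wf = assms(2) and fv = assms(3)
  have fwd: "\<exists>j m. strict_mono j \<and> (\<forall>b. length b = l \<longrightarrow> \<not> AC (\<lambda>i. holds M k \<phi> (a (j i)) b) m)"
    if nip: "NIP M k l \<phi>" and lens: "\<forall>i. length (a i) = k" for a :: "nat \<Rightarrow> 'm list"
  proof (rule ccontr)
    assume neg: "\<not> (\<exists>j m. strict_mono j \<and> (\<forall>b. length b = l \<longrightarrow> \<not> AC (\<lambda>i. holds M k \<phi> (a (j i)) b) m))"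
    then have H: "\<forall>j. strict_mono j \<longrightarrow> (\<forall>m. \<exists>b. length b = l \<and> AC (\<lambda>i. holds M k \<phi> (a (j i)) b) m)"
      by blast
    show False using notNIP_from_H[OF mon wf fv lens H] nip by blast
  qed
  have bwd: "\<exists>a :: nat \<Rightarrow> 'm list. (\<forall>i. length (a i) = k) \<and>
      (\<forall>j :: nat \<Rightarrow> nat. strict_mono j \<longrightarrow> (\<exists>b. length b = l \<and> (\<forall>i::nat. holds M k \<phi> (a (j i)) b = even i)))"
    if nn: "\<not> NIP M k l \<phi>"
  proof -
    obtain a :: "nat \<Rightarrow> 'm list" where a: "\<forall>i. length (a i) = k"
      "\<forall>S :: nat set. \<exists>b. length b = l \<and> (\<forall>i. holds M k \<phi> (a i) b \<longleftrightarrow> i \<in> S)"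
      using nn unfolding NIP_def by blast
    have "\<exists>b. length b = l \<and> (\<forall>i::nat. holds M k \<phi> (a (j i)) b = even i)" if j: "strict_mono j" for j :: "nat \<Rightarrow> nat"
    proof -
      obtain b where b: "length b = l" "\<forall>i. holds M k \<phi> (a i) b \<longleftrightarrow> i \<in> j ` {i. even i}"
        using a(2) by blast
      have "holds M k \<phi> (a (j i)) b = even i" for i :: nat
      proof -
        have "inj j" using strict_mono_imp_inj_on[OF j, of UNIV] .
        then have "(j i \<in> j ` {i. even i}) = even i" by (simp add: inj_image_mem_iff)
        then show ?thesis using b(2) by simp
      qed
      then show ?thesis using b(1) by blast
    qed
    then show ?thesis using a(1) by blast
  qed
  have P2: "NIP M k l \<phi> \<longleftrightarrow>
      (\<forall>a :: nat \<Rightarrow> 'm list. (\<forall>i. length (a i) = k) \<longrightarrow>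
         (\<exists>j :: nat \<Rightarrow> nat. strict_mono j \<and>
            (\<forall>b. length b = l \<longrightarrow>
               (\<exists>n. \<forall>i\<ge>n. holds M k \<phi> (a (j i)) b = holds M k \<phi> (a (j n)) b))))"
  proof
    assume nip: "NIP M k l \<phi>"
    show "\<forall>a :: nat \<Rightarrow> 'm list. (\<forall>i. length (a i) = k) \<longrightarrow>
         (\<exists>j :: nat \<Rightarrow> nat. strict_mono j \<and>
            (\<forall>b. length b = l \<longrightarrow>
               (\<exists>n. \<forall>i\<ge>n. holds M k \<phi> (a (j i)) b = holds M k \<phi> (a (j n)) b)))"
    proof (intro allI impI)
      fix a :: "nat \<Rightarrow> 'm list" assume lens: "\<forall>i. length (a i) = k"
      obtain j :: "nat \<Rightarrow> nat" and m where jm: "strict_mono j" "\<forall>b. length b = l \<longrightarrow> \<not> AC (\<lambda>i. holds M k \<phi> (a (j i)) b) m"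
        using fwd[OF nip lens] by blast
      have "\<exists>n. \<forall>i\<ge>n. holds M k \<phi> (a (j i)) b = holds M k \<phi> (a (j n)) b" if "length b = l" for b
      proof -
        have "\<not> AC (\<lambda>i. holds M k \<phi> (a (j i)) b) m" using jm(2) that by blast
        then have "finite {p. holds M k \<phi> (a (j p)) b \<noteq> holds M k \<phi> (a (j (Suc p))) b}"
          using noAC_fin by blast
        then show ?thesis by (rule ev_const)
      qed
      then show "\<exists>j :: nat \<Rightarrow> nat. strict_mono j \<and>
            (\<forall>b. length b = l \<longrightarrow> (\<exists>n. \<forall>i\<ge>n. holds M k \<phi> (a (j i)) b = holds M k \<phi> (a (j n)) b))"
        using jm(1) by blast
    qed
  next
    assume R: "\<forall>a :: nat \<Rightarrow> 'm list. (\<forall>i. length (a i) = k) \<longrightarrow>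
         (\<exists>j :: nat \<Rightarrow> nat. strict_mono j \<and>
            (\<forall>b. length b = l \<longrightarrow>
               (\<exists>n. \<forall>i\<ge>n. holds M k \<phi> (a (j i)) b = holds M k \<phi> (a (j n)) b)))"
    show "NIP M k l \<phi>"
    proof (rule ccontr)
      assume nn: "\<not> NIP M k l \<phi>"
      obtain a :: "nat \<Rightarrow> 'm list" where a: "\<forall>i. length (a i) = k"
        "\<forall>j :: nat \<Rightarrow> nat. strict_mono j \<longrightarrow> (\<exists>b. length b = l \<and> (\<forall>i::nat. holds M k \<phi> (a (j i)) b = even i))"
        using bwd[OF nn] by blast
      obtain j :: "nat \<Rightarrow> nat" where j: "strict_mono j" "\<forall>b. length b = l \<longrightarrow>
               (\<exists>n. \<forall>i\<ge>n. holds M k \<phi> (a (j i)) b = holds M k \<phi> (a (j n)) b)"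
        using mp[OF spec[OF R, of a] a(1)] by blast
      obtain b where b: "length b = l" "\<forall>i::nat. holds M k \<phi> (a (j i)) b = even i" using mp[OF spec[OF a(2), of j] j(1)] by blast
      obtain n where nn': "\<forall>i\<ge>n. holds M k \<phi> (a (j i)) b = holds M k \<phi> (a (j n)) b" using mp[OF spec[OF j(2), of b] b(1)] by blast
      have "holds M k \<phi> (a (j (Suc n))) b = holds M k \<phi> (a (j n)) b" using spec[OF nn', of "Suc n"] by simp
      then show False using b(2) by simp
    qed
  qed
  have P3: "NIP M k l \<phi> \<longleftrightarrow>
      (\<forall>a :: nat \<Rightarrow> 'm list. (\<forall>i. length (a i) = k) \<longrightarrow>
         (\<exists>j (N :: nat). strict_mono j \<and>
            (\<forall>b. length b = l \<longrightarrow>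
               (let t = (\<lambda>i. \<bar>(of_bool (holds M k \<phi> (a (j i)) b) :: real)
                              - of_bool (holds M k \<phi> (a (j (Suc i))) b)\<bar>)
                in summable (\<lambda>i. t (Suc i)) \<and> (\<Sum>i. t (Suc i)) \<le> real N))))"
  proof
    assume nip: "NIP M k l \<phi>"
    show "\<forall>a :: nat \<Rightarrow> 'm list. (\<forall>i. length (a i) = k) \<longrightarrow>
         (\<exists>j (N :: nat). strict_mono j \<and>
            (\<forall>b. length b = l \<longrightarrow>
               (let t = (\<lambda>i. \<bar>(of_bool (holds M k \<phi> (a (j i)) b) :: real)
                              - of_bool (holds M k \<phi> (a (j (Suc i))) b)\<bar>)
                in summable (\<lambda>i. t (Suc i)) \<and> (\<Sum>i. t (Suc i)) \<le> real N)))"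
    proof (intro allI impI)
      fix a :: "nat \<Rightarrow> 'm list" assume lens: "\<forall>i. length (a i) = k"
      obtain j :: "nat \<Rightarrow> nat" and m where jm: "strict_mono j" "\<forall>b. length b = l \<longrightarrow> \<not> AC (\<lambda>i. holds M k \<phi> (a (j i)) b) m"
        using fwd[OF nip lens] by blast
      have "let t = (\<lambda>i. \<bar>(of_bool (holds M k \<phi> (a (j i)) b) :: real)
                              - of_bool (holds M k \<phi> (a (j (Suc i))) b)\<bar>)
                in summable (\<lambda>i. t (Suc i)) \<and> (\<Sum>i. t (Suc i)) \<le> real m" if "length b = l" for b
      proof -
        have "finite {p. holds M k \<phi> (a (j p)) b \<noteq> holds M k \<phi> (a (j (Suc p))) b} \<and>
            card {p. holds M k \<phi> (a (j p)) b \<noteq> holds M k \<phi> (a (j (Suc p))) b} < m"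
        proof -
          have "\<not> AC (\<lambda>i. holds M k \<phi> (a (j i)) b) m" using jm(2) that by blast
          then show ?thesis by (rule noAC_fin)
        qed
        then show ?thesis using sum_bound[of "\<lambda>i. holds M k \<phi> (a (j i)) b" m] by blast
      qed
      then show "\<exists>j (N :: nat). strict_mono j \<and>
            (\<forall>b. length b = l \<longrightarrow>
               (let t = (\<lambda>i. \<bar>(of_bool (holds M k \<phi> (a (j i)) b) :: real)
                              - of_bool (holds M k \<phi> (a (j (Suc i))) b)\<bar>)
                in summable (\<lambda>i. t (Suc i)) \<and> (\<Sum>i. t (Suc i)) \<le> real N))"
        using jm(1) by blast
    qed
  next
    assume R: "\<forall>a :: nat \<Rightarrow> 'm list. (\<forall>i. length (a i) = k) \<longrightarrow>
         (\<exists>j (N :: nat). strict_mono j \<and>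
            (\<forall>b. length b = l \<longrightarrow>
               (let t = (\<lambda>i. \<bar>(of_bool (holds M k \<phi> (a (j i)) b) :: real)
                              - of_bool (holds M k \<phi> (a (j (Suc i))) b)\<bar>)
                in summable (\<lambda>i. t (Suc i)) \<and> (\<Sum>i. t (Suc i)) \<le> real N)))"
    show "NIP M k l \<phi>"
    proof (rule ccontr)
      assume nn: "\<not> NIP M k l \<phi>"
      obtain a :: "nat \<Rightarrow> 'm list" where a: "\<forall>i. length (a i) = k"
        "\<forall>j :: nat \<Rightarrow> nat. strict_mono j \<longrightarrow> (\<exists>b. length b = l \<and> (\<forall>i::nat. holds M k \<phi> (a (j i)) b = even i))"
        using bwd[OF nn] by blast
      obtain j :: "nat \<Rightarrow> nat" and N where j: "strict_mono j" "\<forall>b. length b = l \<longrightarrow>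
               (let t = (\<lambda>i. \<bar>(of_bool (holds M k \<phi> (a (j i)) b) :: real)
                              - of_bool (holds M k \<phi> (a (j (Suc i))) b)\<bar>)
                in summable (\<lambda>i. t (Suc i)) \<and> (\<Sum>i. t (Suc i)) \<le> real N)"
        using mp[OF spec[OF R, of a] a(1)] by blast
      obtain b where b: "length b = l" "\<forall>i::nat. holds M k \<phi> (a (j i)) b = even i" using mp[OF spec[OF a(2), of j] j(1)] by blast
      have "summable (\<lambda>i. \<bar>(of_bool (holds M k \<phi> (a (j (Suc i))) b) :: real)
                              - of_bool (holds M k \<phi> (a (j (Suc (Suc i)))) b)\<bar>)"
        using mp[OF spec[OF j(2), of b] b(1)] unfolding Let_def by blast
      moreover have "(\<lambda>i. \<bar>(of_bool (holds M k \<phi> (a (j (Suc i))) b) :: real)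
                              - of_bool (holds M k \<phi> (a (j (Suc (Suc i)))) b)\<bar>) = (\<lambda>i. 1)"
        using b(2) by auto
      ultimately have "summable (\<lambda>i. (1::real))" by simp
      then show False by (simp add: summable_const_iff)
    qed
  qed
  have P4: "NIP M k l \<phi> \<longleftrightarrow>
      (\<forall>a :: nat \<Rightarrow> 'm list. (\<forall>i. length (a i) = k) \<longrightarrow>
         (\<exists>j f. strict_mono j \<and>
            (let X = phi_type_space M k l \<phi> (range (a \<circ> j))
             in (\<forall>q \<in> topspace X.
                   (\<lambda>i. (of_bool (q (a (j i))) :: real)) \<longlonglongrightarrow> f q)
                \<and> DBSC X f)))"
  proof
    assume nip: "NIP M k l \<phi>"
    show "\<forall>a :: nat \<Rightarrow> 'm list. (\<forall>i. length (a i) = k) \<longrightarrow>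
         (\<exists>j f. strict_mono j \<and>
            (let X = phi_type_space M k l \<phi> (range (a \<circ> j))
             in (\<forall>q \<in> topspace X.
                   (\<lambda>i. (of_bool (q (a (j i))) :: real)) \<longlonglongrightarrow> f q)
                \<and> DBSC X f))"
    proof (intro allI impI)
      fix a :: "nat \<Rightarrow> 'm list" assume lens: "\<forall>i. length (a i) = k"
      obtain j :: "nat \<Rightarrow> nat" and m where jm: "strict_mono j" "\<forall>b. length b = l \<longrightarrow> \<not> AC (\<lambda>i. holds M k \<phi> (a (j i)) b) m"
        using fwd[OF nip lens] by blast
      obtain f where "let X = phi_type_space M k l \<phi> (range (a \<circ> j))
             in (\<forall>q \<in> topspace X. (\<lambda>i. (of_bool (q (a (j i))) :: real)) \<longlonglongrightarrow> f q) \<and> DBSC X f"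
        using part4[where M=M and k=k and l=l and \<phi>=\<phi> and a=a and j=j and m=m, OF jm(2)] by blast
      then show "\<exists>j f. strict_mono j \<and>
            (let X = phi_type_space M k l \<phi> (range (a \<circ> j))
             in (\<forall>q \<in> topspace X.
                   (\<lambda>i. (of_bool (q (a (j i))) :: real)) \<longlonglongrightarrow> f q)
                \<and> DBSC X f)"
        using jm(1) by blast
    qed
  next
    assume R: "\<forall>a :: nat \<Rightarrow> 'm list. (\<forall>i. length (a i) = k) \<longrightarrow>
         (\<exists>j f. strict_mono j \<and>
            (let X = phi_type_space M k l \<phi> (range (a \<circ> j))
             in (\<forall>q \<in> topspace X.
                   (\<lambda>i. (of_bool (q (a (j i))) :: real)) \<longlonglongrightarrow> f q)
                \<and> DBSC X f))"
    show "NIP M k l \<phi>"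
    proof (rule ccontr)
      assume nn: "\<not> NIP M k l \<phi>"
      obtain a :: "nat \<Rightarrow> 'm list" where a: "\<forall>i. length (a i) = k"
        "\<forall>j :: nat \<Rightarrow> nat. strict_mono j \<longrightarrow> (\<exists>b. length b = l \<and> (\<forall>i::nat. holds M k \<phi> (a (j i)) b = even i))"
        using bwd[OF nn] by blast
      obtain j :: "nat \<Rightarrow> nat" and f where j: "strict_mono j" "\<forall>q \<in> topspace (phi_type_space M k l \<phi> (range (a \<circ> j))).
                   (\<lambda>i. (of_bool (q (a (j i))) :: real)) \<longlonglongrightarrow> f q"
        using mp[OF spec[OF R, of a] a(1)] unfolding Let_def by blast
      obtain b where b: "length b = l" "\<forall>i::nat. holds M k \<phi> (a (j i)) b = even i" using mp[OF spec[OF a(2), of j] j(1)] by blast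
      define A where "A = range (a \<circ> j)"
      define q where "q = restrict (\<lambda>x. holds M k \<phi> x b) A"
      have qA: "q x = holds M k \<phi> x b" if "x \<in> A" for x unfolding q_def using that by simp
      have "q \<in> phi_types M k l \<phi> A"
        unfolding phi_types_def
      proof (intro CollectI conjI allI impI)
        show "q \<in> PiE A (\<lambda>_. UNIV)" unfolding q_def by simp
        fix F assume "F \<subseteq> A" "finite F"
        then show "\<exists>b'. length b' = l \<and> (\<forall>x \<in> F. q x = holds M k \<phi> x b')"
          using b(1) qA by blast
      qed
      moreover have "q \<in> topspace (product_topology (\<lambda>_. discrete_topology UNIV) A)"
        unfolding q_def by simp
      ultimately have "q \<in> topspace (phi_type_space M k l \<phi> A)" unfolding phi_type_space_def by simp
      then have "(\<lambda>i. (of_bool (q (a (j i))) :: real)) \<longlonglongrightarrow> f q" using j(2) unfolding A_def by blast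
      moreover have "(\<lambda>i. (of_bool (q (a (j i))) :: real)) = (\<lambda>i. of_bool (even i))"
        using qA b(2) unfolding A_def by auto
      ultimately show False using not_conv_alt by simp
    qed
  qed
  show ?thesis using P2 P3 P4 by blast
qed

end
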